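(* Let $\mu$ be a probability distribution on $(E,\mathscr{E})$, $\xi:E\to E$ a measurable involution with $\mu\circ\xi^{-1}=\mu$ and $Qf=f\circ\xi$ the associated isometric involution, and $\psi:E\to E$ a measurable bijection with $\psi^{-1}=\xi\circ\psi\circ\xi$. Let $\nu:=\mu+\mu^{\xi\circ\psi}$ and $r(z):=\frac{{\rm d}\mu^{\xi\circ\psi}/{\rm d}\nu(z)}{{\rm d}\mu/{\rm d}\nu(z)}$ when both derivatives are positive, $r(z)=0$ otherwise. For $i\in\{1,2\}$ let $\phi_{i}:\mathbb{R}_{+}\to[0,1]$ satisfy $r\phi_{i}(r^{-1})=\phi_{i}(r)$ for $r>0$ and $\phi_{i}(0)=0$, and let \[P_{i,2}(z,{\rm d}z'):=\phi_{i}\circ r(z)\,\delta_{\psi(z)}({\rm d}z')+\big[1-\phi_{i}\circ r(z)\big]\delta_{\xi(z)}({\rm d}z').\] Let $P_{1,1}=P_{2,1}$ be a $(\mu,Q)$-reversible Markov transition. Assume $\phi_{1}\geq\phi_{2}$. Then for any $f\in L^{2}(\mu)$ with $Qf=f$ and any $\lambda\in[0,1)$, \[{\rm var}_{\lambda}(f,\{P_{1,1},P_{1,2}\})\leq{\rm var}_{\lambda}(f,\{P_{2,1},P_{2,2}\}).\] In particular, among all such $\phi$, the choice $\phi(r)=\min\{1,r\}$ achieves the smallest $\lambda$-asymptotic variance.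
   Context: $\mu^{\varphi}(A):=\mu(\varphi^{-1}(A))$; $\langle f,g\rangle_{\mu}=\int fg\,{\rm d}\mu$. A Markov kernel $P$ is $(\mu,Q)$-reversible if $\langle Pf,g\rangle_{\mu}=\langle f,QPQg\rangle_{\mu}$ for all $f,g\in L^{2}(\mu)$. With $\bar f=f-\mu(f)$ and $\lambda\in[0,1)$, ${\rm var}_{\lambda}(f,\{P_{1},P_{2}\})=\sum_{k\geq0}\big[\lambda^{2k}\langle\bar f,(P_{1}P_{2})^{k}({\rm Id}+\lambda P_{1})\bar f\rangle_{\mu}+\lambda^{2k}\langle\bar f,(P_{2}P_{1})^{k}({\rm Id}+\lambda P_{2})\bar f\rangle_{\mu}\big]-\|\bar f\|_{\mu}^{2}$. *)

theory Defs
  imports "HOL-Probability.Probability"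
begin

definition ip :: "'a measure \<Rightarrow> ('a \<Rightarrow> real) \<Rightarrow> ('a \<Rightarrow> real) \<Rightarrow> real" where
  "ip M f g = (\<integral>x. f x * g x \<partial>M)"

definition L2 :: "'a measure \<Rightarrow> ('a \<Rightarrow> real) \<Rightarrow> bool" where
  "L2 M f \<longleftrightarrow> f \<in> borel_measurable M \<and> integrable M (\<lambda>x. (f x)\<^sup>2)"

definition kop :: "('a \<Rightarrow> 'a measure) \<Rightarrow> ('a \<Rightarrow> real) \<Rightarrow> ('a \<Rightarrow> real)" where
  "kop K f = (\<lambda>z. \<integral>y. f y \<partial>(K z))"

definition markov_kernel :: "'a measure \<Rightarrow> ('a \<Rightarrow> 'a measure) \<Rightarrow> bool" where
  "markov_kernel M K \<longleftrightarrow> K \<in> measurable M (prob_algebra M)"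

definition reversible :: "'a measure \<Rightarrow> ('a \<Rightarrow> 'a) \<Rightarrow> (('a \<Rightarrow> real) \<Rightarrow> ('a \<Rightarrow> real)) \<Rightarrow> bool" where
  "reversible M \<xi> P \<longleftrightarrow>
     (\<forall>f g. L2 M f \<longrightarrow> L2 M g \<longrightarrow>
        ip M (P f) g = ip M f (\<lambda>z. P (\<lambda>y. g (\<xi> y)) (\<xi> z)))"

definition measure_add :: "'a measure \<Rightarrow> 'a measure \<Rightarrow> 'a measure" where
  "measure_add M N = measure_of (space M) (sets M) (\<lambda>A. emeasure M A + emeasure N A)"

definition ratio :: "'a measure \<Rightarrow> ('a \<Rightarrow> 'a) \<Rightarrow> ('a \<Rightarrow> 'a) \<Rightarrow> 'a \<Rightarrow> real" where
  "ratio M \<xi> \<psi> z =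
     (let N = distr M M (\<xi> \<circ> \<psi>);
          \<nu> = measure_add M N;
          d1 = RN_deriv \<nu> M z;
          d2 = RN_deriv \<nu> N z
      in if 0 < d1 \<and> d1 < \<infinity> \<and> 0 < d2 \<and> d2 < \<infinity>
         then enn2real d2 / enn2real d1 else 0)"

definition P2op :: "'a measure \<Rightarrow> ('a \<Rightarrow> 'a) \<Rightarrow> ('a \<Rightarrow> 'a) \<Rightarrow> (real \<Rightarrow> real)
    \<Rightarrow> ('a \<Rightarrow> real) \<Rightarrow> ('a \<Rightarrow> real)" where
  "P2op M \<xi> \<psi> \<phi> f = (\<lambda>z. \<phi> (ratio M \<xi> \<psi> z) * f (\<psi> z)
                          + (1 - \<phi> (ratio M \<xi> \<psi> z)) * f (\<xi> z))"

definition admissible :: "(real \<Rightarrow> real) \<Rightarrow> bool" where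
  "admissible \<phi> \<longleftrightarrow> \<phi> \<in> borel_measurable borel
     \<and> (\<forall>t\<ge>0. 0 \<le> \<phi> t \<and> \<phi> t \<le> 1)
     \<and> (\<forall>t>0. t * \<phi> (1 / t) = \<phi> t)
     \<and> \<phi> 0 = 0"

definition var_lam :: "'a measure \<Rightarrow> real \<Rightarrow> ('a \<Rightarrow> real)
    \<Rightarrow> (('a \<Rightarrow> real) \<Rightarrow> ('a \<Rightarrow> real)) \<Rightarrow> (('a \<Rightarrow> real) \<Rightarrow> ('a \<Rightarrow> real)) \<Rightarrow> real" where
  "var_lam M lam f P1 P2 =
     (let fb = (\<lambda>x. f x - (\<integral>y. f y \<partial>M))
      in (\<Sum>k. lam^(2*k) * ip M fb (((P1 \<circ> P2) ^^ k) (\<lambda>x. fb x + lam * P1 fb x))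
             + lam^(2*k) * ip M fb (((P2 \<circ> P1) ^^ k) (\<lambda>x. fb x + lam * P2 fb x)))
         - ip M fb fb)"

end

theory Submission
  imports Defs
begin


section \<open>Basic L2 facts\<close>

lemma L2_meas: "L2 M f \<Longrightarrow> f \<in> borel_measurable M" by (simp add: L2_def)
lemma L2_sq: "L2 M f \<Longrightarrow> integrable M (\<lambda>x. (f x)\<^sup>2)" by (simp add: L2_def)

lemma L2_mult_integrable:
  assumes "L2 M f" "L2 M g" shows "integrable M (\<lambda>x. f x * g x)"
proof (rule Bochner_Integration.integrable_bound)
  show "integrable M (\<lambda>x. (f x)\<^sup>2 + (g x)\<^sup>2)" using assms by (simp add: L2_def)
  show "(\<lambda>x. f x * g x) \<in> borel_measurable M" using assms by (simp add: L2_def borel_measurable_times)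
  show "AE x in M. norm (f x * g x) \<le> norm ((f x)\<^sup>2 + (g x)\<^sup>2)"
  proof (intro AE_I2)
    fix x
    have "0 \<le> (\<bar>f x\<bar> - \<bar>g x\<bar>)\<^sup>2" by simp
    then have "2 * (\<bar>f x\<bar> * \<bar>g x\<bar>) \<le> \<bar>f x\<bar>\<^sup>2 + \<bar>g x\<bar>\<^sup>2"
      by (simp add: power2_diff)
    moreover have "0 \<le> \<bar>f x\<bar> * \<bar>g x\<bar>" by simp
    ultimately have "\<bar>f x\<bar> * \<bar>g x\<bar> \<le> (f x)\<^sup>2 + (g x)\<^sup>2"
      using power2_abs[of "f x"] power2_abs[of "g x"] by linarith
    then have "\<bar>f x * g x\<bar> \<le> (f x)\<^sup>2 + (g x)\<^sup>2" by (simp add: abs_mult)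
    then show "norm (f x * g x) \<le> norm ((f x)\<^sup>2 + (g x)\<^sup>2)" by simp
  qed
qed

lemma L2_add: assumes "L2 M f" "L2 M g" shows "L2 M (\<lambda>x. f x + g x)"
proof -
  have "integrable M (\<lambda>x. (f x)\<^sup>2 + 2 * (f x * g x) + (g x)\<^sup>2)"
    using assms L2_mult_integrable[OF assms] by (simp add: L2_def)
  then show ?thesis using assms unfolding L2_def by (simp add: power2_sum borel_measurable_add algebra_simps)
qed

lemma L2_scale: assumes "L2 M f" shows "L2 M (\<lambda>x. c * f x)"
  using assms unfolding L2_def by (simp add: power_mult_distrib borel_measurable_times)

lemma L2_uminus: assumes "L2 M f" shows "L2 M (\<lambda>x. - f x)"
  using L2_scale[OF assms, where c="-1"] by simp

lemma L2_diff: assumes "L2 M f" "L2 M g" shows "L2 M (\<lambda>x. f x - g x)"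
  using L2_add[OF assms(1) L2_uminus[OF assms(2)]] by simp

lemma L2_zero: "L2 M (\<lambda>x. 0)" by (simp add: L2_def)

lemma L2_const: assumes "finite_measure M" shows "L2 M (\<lambda>x. c)"
  using assms by (simp add: L2_def finite_measure.integrable_const)

lemma L2_sum: assumes "\<And>i. i \<in> I \<Longrightarrow> L2 M (f i)" shows "L2 M (\<lambda>x. \<Sum>i\<in>I. f i x)"
  using assms
proof (induction I rule: infinite_finite_induct)
  case (insert i I) then show ?case by (simp add: L2_add)
qed (auto simp: L2_zero)

lemma L2_cong: "L2 M f \<Longrightarrow> (\<And>x. x \<in> space M \<Longrightarrow> f x = g x) \<Longrightarrow> L2 M g"
  unfolding L2_def
  by (metis (no_types, lifting) Bochner_Integration.integrable_cong measurable_cong)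

lemma ip_sym: "ip M f g = ip M g f" by (simp add: ip_def mult.commute)

lemma ip_add_left: "L2 M f \<Longrightarrow> L2 M g \<Longrightarrow> L2 M h \<Longrightarrow>
   ip M (\<lambda>x. f x + g x) h = ip M f h + ip M g h"
  unfolding ip_def by (simp add: distrib_right L2_mult_integrable)

lemma ip_add_right: "L2 M f \<Longrightarrow> L2 M g \<Longrightarrow> L2 M h \<Longrightarrow>
   ip M h (\<lambda>x. f x + g x) = ip M h f + ip M h g"
  using ip_add_left[of M f g h] by (simp add: ip_sym)

lemma ip_scale_left: "ip M (\<lambda>x. c * f x) h = c * ip M f h"
  unfolding ip_def by (simp add: mult.assoc)

lemma ip_scale_right: "ip M h (\<lambda>x. c * f x) = c * ip M h f"
  using ip_scale_left[where c=c and M=M and f=f and h=h] by (simp add: ip_sym)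

lemma ip_uminus_left: "ip M (\<lambda>x. - f x) h = - ip M f h"
  using ip_scale_left[where c="-1" and M=M and f=f and h=h] by simp

lemma ip_uminus_right: "ip M h (\<lambda>x. - f x) = - ip M h f"
  using ip_scale_right[where c="-1" and M=M and f=f and h=h] by simp

lemma ip_diff_left: "L2 M f \<Longrightarrow> L2 M g \<Longrightarrow> L2 M h \<Longrightarrow>
   ip M (\<lambda>x. f x - g x) h = ip M f h - ip M g h"
  using ip_add_left[of M f "\<lambda>x. - g x" h] by (simp add: L2_uminus ip_uminus_left)

lemma ip_diff_right: "L2 M f \<Longrightarrow> L2 M g \<Longrightarrow> L2 M h \<Longrightarrow>
   ip M h (\<lambda>x. f x - g x) = ip M h f - ip M h g"
  using ip_diff_left[of M f g h] by (simp add: ip_sym)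

lemma ip_zero_left: "ip M (\<lambda>x. 0) h = 0" by (simp add: ip_def)
lemma ip_zero_right: "ip M h (\<lambda>x. 0) = 0" by (simp add: ip_def)

lemma ip_sum_left: assumes "\<And>i. i \<in> I \<Longrightarrow> L2 M (f i)" "L2 M h"
  shows "ip M (\<lambda>x. \<Sum>i\<in>I. f i x) h = (\<Sum>i\<in>I. ip M (f i) h)"
  using assms
proof (induction I rule: infinite_finite_induct)
  case (insert i I)
  then show ?case by (simp add: ip_add_left L2_sum)
qed (auto simp: ip_zero_left)

lemma ip_sum_right: assumes "\<And>i. i \<in> I \<Longrightarrow> L2 M (f i)" "L2 M h"
  shows "ip M h (\<lambda>x. \<Sum>i\<in>I. f i x) = (\<Sum>i\<in>I. ip M h (f i))"
  using ip_sum_left[OF assms] by (simp add: ip_sym)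

lemma ip_self_nonneg: "0 \<le> ip M f f"
  unfolding ip_def by (rule integral_nonneg_AE) auto

lemma ip_cong: "(\<And>x. x \<in> space M \<Longrightarrow> f x = f' x) \<Longrightarrow> (\<And>x. x \<in> space M \<Longrightarrow> g x = g' x)
  \<Longrightarrow> ip M f g = ip M f' g'"
  unfolding ip_def by (intro Bochner_Integration.integral_cong) auto

lemma quad_nonneg_disc:
  fixes a b c :: real
  assumes "\<And>t. 0 \<le> a - 2 * t * b + t\<^sup>2 * c"
  shows "b\<^sup>2 \<le> a * c"
proof (cases "c = 0")
  case True
  have "b = 0"
  proof (rule ccontr)
    assume "b \<noteq> 0"
    have "0 \<le> a - 2 * ((a + 1) / (2 * b)) * b" using assms[of "(a+1)/(2*b)"] True by simp
    also have "\<dots> = -1" using \<open>b \<noteq> 0\<close> by (simp add: field_simps)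
    finally show False by simp
  qed
  then show ?thesis using True by simp
next
  case False
  have c0: "0 \<le> c"
  proof (rule ccontr)
    assume "\<not> 0 \<le> c"
    then have cn: "c < 0" by simp
    define t where "t = (\<bar>a\<bar> + 2 * \<bar>b\<bar> + 1) / (- c) + 1"
    have "0 \<le> (\<bar>a\<bar> + 2 * \<bar>b\<bar> + 1) / (- c)" by (rule divide_nonneg_pos) (use cn in auto)
    then have t1: "1 \<le> t" by (simp add: t_def)
    have "t * (- c) \<ge> \<bar>a\<bar> + 2 * \<bar>b\<bar> + 1" using cn
      by (simp add: t_def field_simps)
    then have "t * (t * (-c)) \<ge> t * (\<bar>a\<bar> + 2 * \<bar>b\<bar> + 1)" using t1
      by (intro mult_left_mono) auto
    then have "t\<^sup>2 * (-c) \<ge> t * \<bar>a\<bar> + 2 * t * \<bar>b\<bar> + t"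
      by (simp add: power2_eq_square algebra_simps)
    then have A: "t\<^sup>2 * (-c) \<ge> t * \<bar>a\<bar> + 2 * (t * \<bar>b\<bar>) + t" by simp
    have B: "t * \<bar>a\<bar> \<ge> 1 * \<bar>a\<bar>" using t1 by (intro mult_right_mono) auto
    have C: "t * (- \<bar>b\<bar>) \<le> t * b" using t1 by (intro mult_left_mono) auto
    have D: "a \<le> \<bar>a\<bar>" by simp
    have E: "a - 2 * t * b + t\<^sup>2 * c = a - 2 * (t * b) - t\<^sup>2 * (-c)" by (simp add: algebra_simps)
    have "a - 2 * t * b + t\<^sup>2 * c < 0" unfolding E using A B C D t1 by linarith
    with assms[of t] show False by simp
  qed
  then have cpos: "0 < c" using False by simp
  have "0 \<le> a - 2 * (b / c) * b + (b/c)\<^sup>2 * c" by (rule assms)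
  also have "\<dots> = a - b\<^sup>2 / c" using cpos by (simp add: field_simps power2_eq_square)
  finally show ?thesis using cpos by (simp add: field_simps)
qed

lemma ip_CS_sq: assumes "L2 M f" "L2 M g" shows "(ip M f g)\<^sup>2 \<le> ip M f f * ip M g g"
proof (rule quad_nonneg_disc)
  fix t
  have L: "L2 M (\<lambda>x. t * g x)" using assms(2) by (rule L2_scale)
  have "0 \<le> ip M (\<lambda>x. f x - t * g x) (\<lambda>x. f x - t * g x)" by (rule ip_self_nonneg)
  also have "\<dots> = ip M f f - 2 * t * ip M f g + t\<^sup>2 * ip M g g"
    using assms L
    by (simp add: ip_diff_left ip_diff_right L2_diff ip_scale_left ip_scale_right ip_sym[of M g f]
        power2_eq_square algebra_simps)
  finally show "0 \<le> ip M f f - 2 * t * ip M f g + t\<^sup>2 * ip M g g" .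
qed

definition nrm :: "'a measure \<Rightarrow> ('a \<Rightarrow> real) \<Rightarrow> real" where
  "nrm M f = sqrt (ip M f f)"

lemma nrm_nonneg: "0 \<le> nrm M f" by (simp add: nrm_def ip_self_nonneg)
lemma nrm_sq: "(nrm M f)\<^sup>2 = ip M f f" by (simp add: nrm_def ip_self_nonneg)

lemma ip_CS: assumes "L2 M f" "L2 M g" shows "\<bar>ip M f g\<bar> \<le> nrm M f * nrm M g"
proof -
  have "(ip M f g)\<^sup>2 \<le> (nrm M f * nrm M g)\<^sup>2"
    using ip_CS_sq[OF assms] by (simp add: power_mult_distrib nrm_sq)
  then have "\<bar>ip M f g\<bar>\<^sup>2 \<le> (nrm M f * nrm M g)\<^sup>2" by simp
  then show ?thesis using nrm_nonneg[of M f] nrm_nonneg[of M g]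
    by (meson power2_le_imp_le mult_nonneg_nonneg)
qed

lemma nrm_add: assumes "L2 M f" "L2 M g" shows "nrm M (\<lambda>x. f x + g x) \<le> nrm M f + nrm M g"
proof -
  have "(nrm M (\<lambda>x. f x + g x))\<^sup>2 = ip M f f + 2 * ip M f g + ip M g g"
    using assms by (simp add: nrm_sq ip_add_left ip_add_right L2_add ip_sym[of M g f])
  also have "\<dots> \<le> (nrm M f)\<^sup>2 + 2 * (nrm M f * nrm M g) + (nrm M g)\<^sup>2"
    using ip_CS[OF assms] by (simp add: nrm_sq)
  also have "\<dots> = (nrm M f + nrm M g)\<^sup>2" by (simp add: power2_sum)
  finally show ?thesis using nrm_nonneg
    by (meson add_nonneg_nonneg power2_le_imp_le)
qed

lemma nrm_scale: "nrm M (\<lambda>x. c * f x) = \<bar>c\<bar> * nrm M f"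
  by (simp add: nrm_def ip_scale_left ip_scale_right real_sqrt_mult mult.assoc[symmetric] power2_eq_square[symmetric])

lemma nrm_sum: assumes "\<And>i. i \<in> I \<Longrightarrow> L2 M (f i)"
  shows "nrm M (\<lambda>x. \<Sum>i\<in>I. f i x) \<le> (\<Sum>i\<in>I. nrm M (f i))"
  using assms
proof (induction I rule: infinite_finite_induct)
  case (infinite A) then show ?case by (simp add: nrm_def ip_zero_left)
next
  case empty then show ?case by (simp add: nrm_def ip_zero_left)
next
  case (insert i I)
  have "nrm M (\<lambda>x. \<Sum>i\<in>insert i I. f i x) = nrm M (\<lambda>x. f i x + (\<Sum>i\<in>I. f i x))"
    using insert by simp
  also have "\<dots> \<le> nrm M (f i) + nrm M (\<lambda>x. \<Sum>i\<in>I. f i x)"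
    using insert nrm_add[of M "f i" "\<lambda>x. \<Sum>i\<in>I. f i x"] by (simp add: L2_sum)
  also have "\<dots> \<le> nrm M (f i) + (\<Sum>i\<in>I. nrm M (f i))" using insert by simp
  finally show ?case using insert by simp
qed



definition Qop :: "('a \<Rightarrow> 'a) \<Rightarrow> ('a \<Rightarrow> real) \<Rightarrow> ('a \<Rightarrow> real)" where
  "Qop \<xi> f = (\<lambda>x. f (\<xi> x))"

locale qsys =
  fixes M :: "'a measure" and \<xi> :: "'a \<Rightarrow> 'a"
  assumes prob: "prob_space M"
    and xi_meas: "\<xi> \<in> measurable M M"
    and xi_inv: "\<forall>x\<in>space M. \<xi> (\<xi> x) = x"
    and xi_pres: "distr M M \<xi> = M"
begin

abbreviation Q where "Q \<equiv> Qop \<xi>"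

lemma L2_Q: assumes "L2 M f" shows "L2 M (Q f)"
proof -
  have fm: "f \<in> borel_measurable M" using assms by (simp add: L2_def)
  have "integrable (distr M M \<xi>) (\<lambda>x. (f x)\<^sup>2)" using assms xi_pres by (simp add: L2_def)
  then have "integrable M (\<lambda>x. (f (\<xi> x))\<^sup>2)"
    using integrable_distr_eq[OF xi_meas, of "\<lambda>x. (f x)\<^sup>2"] fm by simp
  moreover have "(\<lambda>x. f (\<xi> x)) \<in> borel_measurable M"
    using measurable_compose[OF xi_meas fm] by (simp add: comp_def)
  ultimately show ?thesis by (simp add: L2_def Qop_def)
qed

lemma ip_Q: assumes "L2 M f" "L2 M g" shows "ip M (Q f) (Q g) = ip M f g"
proof -
  have m: "(\<lambda>x. f x * g x) \<in> borel_measurable M" using assms by (simp add: L2_def borel_measurable_times)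
  have "ip M f g = integral\<^sup>L (distr M M \<xi>) (\<lambda>x. f x * g x)" using xi_pres by (simp add: ip_def)
  also have "\<dots> = ip M (Q f) (Q g)" using integral_distr[OF xi_meas m] by (simp add: ip_def Qop_def)
  finally show ?thesis by simp
qed

lemma QQ: "x \<in> space M \<Longrightarrow> Q (Q f) x = f x"
  using xi_inv by (simp add: Qop_def)

lemma ip_QQ_left: "ip M (Q (Q f)) g = ip M f g"
  by (rule ip_cong) (auto simp: QQ)
lemma ip_QQ_right: "ip M g (Q (Q f)) = ip M g f"
  by (rule ip_cong) (auto simp: QQ)

lemma ip_Q_swap: assumes "L2 M f" "L2 M g" shows "ip M (Q f) g = ip M f (Q g)"
proof -
  have "ip M (Q f) g = ip M (Q (Q f)) (Q g)" using ip_Q[OF L2_Q[OF assms(1)] assms(2)] by simp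
  then show ?thesis by (simp add: ip_QQ_left)
qed

lemma nrm_Q: assumes "L2 M f" shows "nrm M (Q f) = nrm M f"
  using ip_Q[OF assms assms] by (simp add: nrm_def)

lemma Q_add: "Q (\<lambda>x. f x + g x) = (\<lambda>x. Q f x + Q g x)" by (simp add: Qop_def)
lemma Q_scale: "Q (\<lambda>x. c * f x) = (\<lambda>x. c * Q f x)" by (simp add: Qop_def)
lemma Q_diff: "Q (\<lambda>x. f x - g x) = (\<lambda>x. Q f x - Q g x)" by (simp add: Qop_def)
lemma Q_uminus: "Q (\<lambda>x. - f x) = (\<lambda>x. - Q f x)" by (simp add: Qop_def)

end

definition good_op :: "'a measure \<Rightarrow> ('a \<Rightarrow> 'a) \<Rightarrow> (('a \<Rightarrow> real) \<Rightarrow> ('a \<Rightarrow> real)) \<Rightarrow> bool" where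
  "good_op M \<xi> P \<longleftrightarrow> (\<forall>f. L2 M f \<longrightarrow> L2 M (P f))
     \<and> (\<forall>f g. L2 M f \<longrightarrow> L2 M g \<longrightarrow> ip M (P f) g = ip M f (Qop \<xi> (P (Qop \<xi> g))))
     \<and> (\<forall>f. L2 M f \<longrightarrow> ip M (P f) (P f) \<le> ip M f f)"

context qsys begin

context
  fixes P assumes gP: "good_op M \<xi> P"
begin

lemma L2_P: "L2 M f \<Longrightarrow> L2 M (P f)" using gP by (simp add: good_op_def)
lemma rev_P: "L2 M f \<Longrightarrow> L2 M g \<Longrightarrow> ip M (P f) g = ip M f (Q (P (Q g)))"
  using gP by (simp add: good_op_def)
lemma contr_P: "L2 M f \<Longrightarrow> ip M (P f) (P f) \<le> ip M f f" using gP unfolding good_op_def by blast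

lemma L2_QPQ: "L2 M g \<Longrightarrow> L2 M (Q (P (Q g)))" by (simp add: L2_Q L2_P)

lemma nrm_P: "L2 M f \<Longrightarrow> nrm M (P f) \<le> nrm M f"
  unfolding nrm_def using contr_P by simp

lemma ipP_add: assumes "L2 M f" "L2 M g" "L2 M w"
  shows "ip M (P (\<lambda>x. f x + g x)) w = ip M (P f) w + ip M (P g) w"
  using assms by (simp add: rev_P L2_add L2_QPQ ip_add_left)

lemma ipP_scale: assumes "L2 M f" "L2 M w"
  shows "ip M (P (\<lambda>x. c * f x)) w = c * ip M (P f) w"
  using assms by (simp add: rev_P L2_scale L2_QPQ ip_scale_left)

lemma ipP_cong: assumes "L2 M f" "\<And>x. x \<in> space M \<Longrightarrow> f x = g x" "L2 M w"
  shows "ip M (P f) w = ip M (P g) w"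
proof -
  have g: "L2 M g" using assms L2_cong by blast
  show ?thesis using assms g by (simp add: rev_P L2_QPQ) (rule ip_cong, auto)
qed

lemma ipP_sum: assumes "\<And>i. i \<in> I \<Longrightarrow> L2 M (f i)" "L2 M w"
  shows "ip M (P (\<lambda>x. \<Sum>i\<in>I. c i * f i x)) w = (\<Sum>i\<in>I. c i * ip M (P (f i)) w)"
proof -
  have "ip M (P (\<lambda>x. \<Sum>i\<in>I. c i * f i x)) w = ip M (\<lambda>x. \<Sum>i\<in>I. c i * f i x) (Q (P (Q w)))"
    using assms by (simp add: rev_P L2_sum L2_scale)
  also have "\<dots> = (\<Sum>i\<in>I. ip M (\<lambda>x. c i * f i x) (Q (P (Q w))))"
    using assms by (simp add: ip_sum_left L2_scale L2_QPQ)
  also have "\<dots> = (\<Sum>i\<in>I. c i * ip M (P (f i)) w)"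
    using assms by (simp add: ip_scale_left rev_P)
  finally show ?thesis .
qed

lemma ip_QP_sym: assumes "L2 M f" "L2 M g"
  shows "ip M (Q f) (P g) = ip M (Q g) (P f)"
proof -
  have "ip M (Q f) (P g) = ip M (P g) (Q f)" by (simp add: ip_sym)
  also have "\<dots> = ip M g (Q (P (Q (Q f))))" using assms by (simp add: rev_P L2_Q)
  also have "\<dots> = ip M g (Q (P f))"
  proof -
    have "ip M (P (Q (Q f))) (Q g) = ip M (P f) (Q g)"
      using assms by (intro ipP_cong) (auto simp: L2_Q QQ)
    then have "ip M (Q g) (P (Q (Q f))) = ip M (Q g) (P f)" by (simp add: ip_sym)
    moreover have "ip M g (Q (P (Q (Q f)))) = ip M (Q g) (P (Q (Q f)))"
      using assms by (intro ip_Q_swap[symmetric]) (auto simp: L2_Q L2_P)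
    moreover have "ip M g (Q (P f)) = ip M (Q g) (P f)"
      using assms by (intro ip_Q_swap[symmetric]) (auto simp: L2_Q L2_P)
    ultimately show ?thesis by simp
  qed
  also have "\<dots> = ip M (Q g) (P f)" using assms by (simp add: ip_Q_swap L2_P)
  finally show ?thesis .
qed

lemma ip_QP_bound: assumes "L2 M f" shows "\<bar>ip M (Q f) (P f)\<bar> \<le> ip M f f"
proof -
  have "\<bar>ip M (Q f) (P f)\<bar> \<le> nrm M (Q f) * nrm M (P f)" using assms by (simp add: ip_CS L2_Q L2_P)
  also have "\<dots> \<le> nrm M f * nrm M f" using assms
    by (simp add: nrm_Q mult_left_mono nrm_P nrm_nonneg)
  also have "\<dots> = ip M f f" using nrm_sq[of M f] by (simp add: power2_eq_square)
  finally show ?thesis .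
qed

end

end



context qsys begin

definition Lf where
  "Lf P1 P2 u lam y x = 2 * ip M u y + 2 * ip M u x - 2 * ip M (Q y) x
     + lam * ip M (Q y) (P1 y) + lam * ip M (Q x) (P2 x)"

definition qf where
  "qf P1 P2 lam dy dx = 2 * ip M (Q dy) dx - lam * ip M (Q dy) (P1 dy) - lam * ip M (Q dx) (P2 dx)"

lemma G:
  assumes g1: "good_op M \<xi> P1" and g2: "good_op M \<xi> P2"
    and L: "L2 M Y" "L2 M X" "L2 M e1" "L2 M e2" "L2 M dy" "L2 M dx" "L2 M u"
    and Qu: "\<And>v. L2 M v \<Longrightarrow> ip M (Q v) u = ip M v u"
    and E1: "\<And>v. L2 M v \<Longrightarrow> ip M v X - lam * ip M v (P1 Y) = ip M v u + ip M v e1"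
    and E2: "\<And>v. L2 M v \<Longrightarrow> ip M v Y - lam * ip M v (P2 X) = ip M v u + ip M v e2"
  shows "ip M u X + ip M u Y = Lf P1 P2 u lam (\<lambda>x. Y x + dy x) (\<lambda>x. X x + dx x) + qf P1 P2 lam dy dx
     + ip M (Q Y) e1 + 2 * ip M (Q dy) e1 + ip M (Q X) e2 + 2 * ip M (Q dx) e2"
proof -
  note LQ = L2_Q[OF L(1)] L2_Q[OF L(2)] L2_Q[OF L(5)] L2_Q[OF L(6)]
  have F1: "ip M u (\<lambda>x. Y x + dy x) = ip M u Y + ip M u dy" using L by (simp add: ip_add_right)
  have F2: "ip M u (\<lambda>x. X x + dx x) = ip M u X + ip M u dx" using L by (simp add: ip_add_right)
  have F3: "ip M (Q (\<lambda>x. Y x + dy x)) (\<lambda>x. X x + dx x) =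
      ip M (Q Y) X + ip M (Q Y) dx + ip M (Q dy) X + ip M (Q dy) dx"
    using L LQ by (simp add: Q_add ip_add_right ip_add_left L2_add)
  have P1add: "ip M w (P1 (\<lambda>x. Y x + dy x)) = ip M w (P1 Y) + ip M w (P1 dy)" if "L2 M w" for w
    using ipP_add[OF g1 L(1) L(5) that] by (simp add: ip_sym)
  have P2add: "ip M w (P2 (\<lambda>x. X x + dx x)) = ip M w (P2 X) + ip M w (P2 dx)" if "L2 M w" for w
    using ipP_add[OF g2 L(2) L(6) that] by (simp add: ip_sym)
  have F4: "ip M (Q (\<lambda>x. Y x + dy x)) (P1 (\<lambda>x. Y x + dy x)) =
      ip M (Q Y) (P1 Y) + ip M (Q Y) (P1 dy) + ip M (Q dy) (P1 Y) + ip M (Q dy) (P1 dy)"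
    using L LQ L2_P[OF g1] L2_P[OF g1, OF L2_add[OF L(1) L(5)]]
    by (simp add: Q_add ip_add_left P1add)
  have F5: "ip M (Q (\<lambda>x. X x + dx x)) (P2 (\<lambda>x. X x + dx x)) =
      ip M (Q X) (P2 X) + ip M (Q X) (P2 dx) + ip M (Q dx) (P2 X) + ip M (Q dx) (P2 dx)"
    using L LQ L2_P[OF g2] L2_P[OF g2, OF L2_add[OF L(2) L(6)]]
    by (simp add: Q_add ip_add_left P2add)
  have S1: "ip M (Q Y) (P1 dy) = ip M (Q dy) (P1 Y)" using ip_QP_sym[OF g1 L(1) L(5)] .
  have S2: "ip M (Q X) (P2 dx) = ip M (Q dx) (P2 X)" using ip_QP_sym[OF g2 L(2) L(6)] .
  have S3: "ip M (Q Y) dx = ip M (Q dx) Y" using ip_Q_swap[OF L(1) L(6)] by (simp add: ip_sym)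
  have S4: "ip M (Q Y) X = ip M (Q X) Y" using ip_Q_swap[OF L(1) L(2)] by (simp add: ip_sym)
  have a1: "ip M (Q Y) X - lam * ip M (Q Y) (P1 Y) = ip M (Q Y) u + ip M (Q Y) e1" using E1 LQ by simp
  have a2: "ip M (Q dy) X - lam * ip M (Q dy) (P1 Y) = ip M (Q dy) u + ip M (Q dy) e1" using E1 LQ by simp
  have a3: "ip M (Q X) Y - lam * ip M (Q X) (P2 X) = ip M (Q X) u + ip M (Q X) e2" using E2 LQ by simp
  have a4: "ip M (Q dx) Y - lam * ip M (Q dx) (P2 X) = ip M (Q dx) u + ip M (Q dx) e2" using E2 LQ by simp
  have b1: "ip M (Q Y) u = ip M u Y" using Qu[OF L(1)] by (simp add: ip_sym)
  have b2: "ip M (Q X) u = ip M u X" using Qu[OF L(2)] by (simp add: ip_sym)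
  have b3: "ip M (Q dy) u = ip M u dy" using Qu[OF L(5)] by (simp add: ip_sym)
  have b4: "ip M (Q dx) u = ip M u dx" using Qu[OF L(6)] by (simp add: ip_sym)
  show ?thesis unfolding Lf_def qf_def F1 F2 F3 F4 F5
    using S1 S2 S3 S4 a1 a2 a3 a4 b1 b2 b3 b4 by (simp add: algebra_simps)
qed

lemma q_pos:
  assumes g1: "good_op M \<xi> P1" and g2: "good_op M \<xi> P2" and lam: "0 \<le> lam" "lam \<le> 1"
    and L: "L2 M dy" "L2 M dx" and eq: "\<And>x. x \<in> space M \<Longrightarrow> dx x = Q dy x"
  shows "0 \<le> qf P1 P2 lam dy dx"
proof -
  have i1: "ip M (Q dy) dx = ip M dy dy"
    using ip_cong[of M "Q dy" "Q dy" dx "Q dy"] eq ip_Q[OF L(1) L(1)] by simp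
  have i2: "ip M dx dx = ip M dy dy"
    using ip_cong[of M dx "Q dy" dx "Q dy"] eq ip_Q[OF L(1) L(1)] by simp
  have c1: "\<bar>ip M (Q dy) (P1 dy)\<bar> \<le> ip M dy dy" by (rule ip_QP_bound[OF g1 L(1)])
  have c2: "\<bar>ip M (Q dx) (P2 dx)\<bar> \<le> ip M dy dy" using ip_QP_bound[OF g2 L(2)] i2 by simp
  have "lam * ip M (Q dy) (P1 dy) \<le> 1 * ip M dy dy"
  proof -
    have "lam * \<bar>ip M (Q dy) (P1 dy)\<bar> \<le> 1 * ip M dy dy"
      using c1 lam ip_self_nonneg[of M dy] by (intro mult_mono) auto
    then show ?thesis using lam by (smt (verit) abs_mult abs_of_nonneg abs_le_iff)
  qed
  moreover have "lam * ip M (Q dx) (P2 dx) \<le> 1 * ip M dy dy"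
  proof -
    have "lam * \<bar>ip M (Q dx) (P2 dx)\<bar> \<le> 1 * ip M dy dy"
      using c2 lam ip_self_nonneg[of M dy] by (intro mult_mono) auto
    then show ?thesis using lam by (smt (verit) abs_mult abs_of_nonneg abs_le_iff)
  qed
  ultimately show ?thesis unfolding qf_def i1 by simp
qed

lemma q_neg:
  assumes g1: "good_op M \<xi> P1" and g2: "good_op M \<xi> P2" and lam: "0 \<le> lam" "lam \<le> 1"
    and L: "L2 M dy" "L2 M dx" and eq: "\<And>x. x \<in> space M \<Longrightarrow> dx x = - Q dy x"
  shows "qf P1 P2 lam dy dx \<le> 0"
proof -
  have LQ: "L2 M (\<lambda>x. - Q dy x)" using L2_uminus[OF L2_Q[OF L(1)]] .
  have i1: "ip M (Q dy) dx = - ip M dy dy"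
    using ip_cong[of M "Q dy" "Q dy" dx "\<lambda>x. - Q dy x"] eq ip_Q[OF L(1) L(1)] by (simp add: ip_uminus_right)
  have i2: "ip M dx dx = ip M dy dy"
    using ip_cong[of M dx "\<lambda>x. - Q dy x" dx "\<lambda>x. - Q dy x"] eq ip_Q[OF L(1) L(1)]
    by (simp add: ip_uminus_right ip_uminus_left)
  have c1: "\<bar>ip M (Q dy) (P1 dy)\<bar> \<le> ip M dy dy" by (rule ip_QP_bound[OF g1 L(1)])
  have c2: "\<bar>ip M (Q dx) (P2 dx)\<bar> \<le> ip M dy dy" using ip_QP_bound[OF g2 L(2)] i2 by simp
  have "- (lam * ip M (Q dy) (P1 dy)) \<le> 1 * ip M dy dy"
  proof -
    have "lam * \<bar>ip M (Q dy) (P1 dy)\<bar> \<le> 1 * ip M dy dy"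
      using c1 lam ip_self_nonneg[of M dy] by (intro mult_mono) auto
    then show ?thesis using lam by (smt (verit) abs_mult abs_of_nonneg abs_le_iff)
  qed
  moreover have "- (lam * ip M (Q dx) (P2 dx)) \<le> 1 * ip M dy dy"
  proof -
    have "lam * \<bar>ip M (Q dx) (P2 dx)\<bar> \<le> 1 * ip M dy dy"
      using c2 lam ip_self_nonneg[of M dy] by (intro mult_mono) auto
    then show ?thesis using lam by (smt (verit) abs_mult abs_of_nonneg abs_le_iff)
  qed
  ultimately show ?thesis unfolding qf_def i1 by simp
qed

lemma nrm_uminus: "nrm M (\<lambda>x. - f x) = nrm M f"
  using nrm_scale[of M "-1" f] by simp

lemma nrm_diff: assumes "L2 M f" "L2 M g" shows "nrm M (\<lambda>x. f x - g x) \<le> nrm M f + nrm M g"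
proof -
  have "nrm M (\<lambda>x. f x + (-1) * g x) \<le> nrm M f + nrm M (\<lambda>x. (-1) * g x)"
    using assms by (intro nrm_add L2_scale)
  then show ?thesis by (simp add: nrm_uminus)
qed

lemma R_bound: assumes "L2 M w" "L2 M e" "nrm M w \<le> A" "nrm M e \<le> eps"
  shows "\<bar>ip M (Q w) e\<bar> \<le> A * eps"
proof -
  have "\<bar>ip M (Q w) e\<bar> \<le> nrm M (Q w) * nrm M e" using assms by (simp add: ip_CS L2_Q)
  also have "\<dots> \<le> A * eps" using assms nrm_Q[OF assms(1)] order_trans[OF nrm_nonneg[of M w] assms(3)]
    by (intro mult_mono) (auto simp: nrm_nonneg)
  finally show ?thesis .
qed

lemma compare:
  assumes g1: "good_op M \<xi> P1" and ga: "good_op M \<xi> Pa" and gb: "good_op M \<xi> Pb"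
    and dir: "\<And>x. L2 M x \<Longrightarrow> ip M (Q x) (Pa x) \<le> ip M (Q x) (Pb x)"
    and lam: "0 \<le> lam" "lam \<le> 1"
    and Lu: "L2 M u" and Qu: "\<And>v. L2 M v \<Longrightarrow> ip M (Q v) u = ip M v u"
    and La: "L2 M Ya" "L2 M Xa" "L2 M e1a" "L2 M e2a"
    and Lb: "L2 M Yb" "L2 M Xb" "L2 M e1b" "L2 M e2b"
    and E1a: "\<And>v. L2 M v \<Longrightarrow> ip M v Xa - lam * ip M v (P1 Ya) = ip M v u + ip M v e1a"
    and E2a: "\<And>v. L2 M v \<Longrightarrow> ip M v Ya - lam * ip M v (Pa Xa) = ip M v u + ip M v e2a"
    and E1b: "\<And>v. L2 M v \<Longrightarrow> ip M v Xb - lam * ip M v (P1 Yb) = ip M v u + ip M v e1b"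
    and E2b: "\<And>v. L2 M v \<Longrightarrow> ip M v Yb - lam * ip M v (Pb Xb) = ip M v u + ip M v e2b"
    and Na: "nrm M Ya \<le> C" "nrm M Xa \<le> C" and Nb: "nrm M Yb \<le> C" "nrm M Xb \<le> C"
    and Ne: "nrm M e1a \<le> eps" "nrm M e2a \<le> eps" "nrm M e1b \<le> eps" "nrm M e2b \<le> eps"
  shows "ip M u Xa + ip M u Ya \<le> ip M u Xb + ip M u Yb + 28 * C * eps"
proof -
  define bb where "bb = (\<lambda>x. (1/2) * ((Yb x - Ya x) - (Q Xb x - Q Xa x)))"
  define dx1 where "dx1 = (\<lambda>x. - Q bb x)"
  define dy2 where "dy2 = (\<lambda>x. Ya x + bb x - Yb x)"
  define dx2 where "dx2 = (\<lambda>x. Xa x + dx1 x - Xb x)"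
  define zy where "zy = (\<lambda>x. Ya x + bb x)"
  define zx where "zx = (\<lambda>x. Xa x + dx1 x)"
  have Lbb: "L2 M bb" unfolding bb_def using La Lb
    by (intro L2_scale L2_diff L2_Q) auto
  have Ldx1: "L2 M dx1" unfolding dx1_def using Lbb by (intro L2_uminus L2_Q)
  have Ldy2: "L2 M dy2" unfolding dy2_def using La Lb Lbb by (intro L2_diff L2_add)
  have Ldx2: "L2 M dx2" unfolding dx2_def using La Lb Ldx1 by (intro L2_diff L2_add)
  have Lzx: "L2 M zx" unfolding zx_def using La Ldx1 by (intro L2_add)
  have zy2: "(\<lambda>x. Yb x + dy2 x) = zy" unfolding zy_def dy2_def by auto
  have zx2: "(\<lambda>x. Xb x + dx2 x) = zx" unfolding zx_def dx2_def by auto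
  have Ga: "ip M u Xa + ip M u Ya = Lf P1 Pa u lam zy zx + qf P1 Pa lam bb dx1
     + ip M (Q Ya) e1a + 2 * ip M (Q bb) e1a + ip M (Q Xa) e2a + 2 * ip M (Q dx1) e2a"
    unfolding zy_def zx_def
    by (rule G[OF g1 ga La Lbb Ldx1 Lu Qu E1a E2a])
  have Gb: "ip M u Xb + ip M u Yb = Lf P1 Pb u lam zy zx + qf P1 Pb lam dy2 dx2
     + ip M (Q Yb) e1b + 2 * ip M (Q dy2) e1b + ip M (Q Xb) e2b + 2 * ip M (Q dx2) e2b"
    unfolding zy2[symmetric] zx2[symmetric]
    by (rule G[OF g1 gb Lb Ldy2 Ldx2 Lu Qu E1b E2b])
  have qa: "qf P1 Pa lam bb dx1 \<le> 0"
    by (rule q_neg[OF g1 ga lam Lbb Ldx1]) (simp add: dx1_def)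
  have qb: "0 \<le> qf P1 Pb lam dy2 dx2"
  proof (rule q_pos[OF g1 gb lam Ldy2 Ldx2])
    fix x assume x: "x \<in> space M"
    have xx: "\<xi> (\<xi> x) = x" using xi_inv x by simp
    show "dx2 x = Q dy2 x"
      unfolding dx2_def dy2_def dx1_def bb_def Qop_def using xx by (simp add: algebra_simps)
  qed
  have Lab: "Lf P1 Pa u lam zy zx \<le> Lf P1 Pb u lam zy zx"
    unfolding Lf_def using dir[OF Lzx] lam by (simp add: mult_left_mono)
  have nbb: "nrm M bb \<le> 2 * C"
  proof -
    have "nrm M bb = (1/2) * nrm M (\<lambda>x. (Yb x - Ya x) - (Q Xb x - Q Xa x))"
      unfolding bb_def by (subst nrm_scale) simp
    also have "\<dots> \<le> (1/2) * ((nrm M Yb + nrm M Ya) + (nrm M (Q Xb) + nrm M (Q Xa)))"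
    proof -
      have "nrm M (\<lambda>x. (Yb x - Ya x) - (Q Xb x - Q Xa x)) \<le> nrm M (\<lambda>x. Yb x - Ya x) + nrm M (\<lambda>x. Q Xb x - Q Xa x)"
        using La Lb by (intro nrm_diff L2_diff L2_Q) auto
      also have "\<dots> \<le> (nrm M Yb + nrm M Ya) + (nrm M (Q Xb) + nrm M (Q Xa))"
        using La Lb by (intro add_mono nrm_diff L2_Q) auto
      finally show ?thesis by simp
    qed
    also have "\<dots> \<le> 2 * C" using Na Nb La Lb by (simp add: nrm_Q)
    finally show ?thesis .
  qed
  have ndx1: "nrm M dx1 \<le> 2 * C" unfolding dx1_def using nbb Lbb by (simp add: nrm_uminus nrm_Q)
  have ndy2: "nrm M dy2 \<le> 4 * C"
  proof -
    have "nrm M dy2 \<le> nrm M (\<lambda>x. Ya x + bb x) + nrm M Yb" unfolding dy2_def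
      using La Lb Lbb by (intro nrm_diff L2_add) auto
    also have "\<dots> \<le> (nrm M Ya + nrm M bb) + nrm M Yb"
      using La Lbb by (intro add_mono nrm_add) auto
    finally show ?thesis using Na Nb nbb by simp
  qed
  have ndx2: "nrm M dx2 \<le> 4 * C"
  proof -
    have "nrm M dx2 \<le> nrm M (\<lambda>x. Xa x + dx1 x) + nrm M Xb" unfolding dx2_def
      using La Lb Ldx1 by (intro nrm_diff L2_add) auto
    also have "\<dots> \<le> (nrm M Xa + nrm M dx1) + nrm M Xb"
      using La Ldx1 by (intro add_mono nrm_add) auto
    finally show ?thesis using Na Nb ndx1 by simp
  qed
  have r1: "\<bar>ip M (Q Ya) e1a\<bar> \<le> C * eps" using La Na Ne by (intro R_bound) auto
  have r2: "\<bar>ip M (Q bb) e1a\<bar> \<le> (2*C) * eps" using La Lbb nbb Ne by (intro R_bound) auto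
  have r3: "\<bar>ip M (Q Xa) e2a\<bar> \<le> C * eps" using La Na Ne by (intro R_bound) auto
  have r4: "\<bar>ip M (Q dx1) e2a\<bar> \<le> (2*C) * eps" using La Ldx1 ndx1 Ne by (intro R_bound) auto
  have r5: "\<bar>ip M (Q Yb) e1b\<bar> \<le> C * eps" using Lb Nb Ne by (intro R_bound) auto
  have r6: "\<bar>ip M (Q dy2) e1b\<bar> \<le> (4*C) * eps" using Lb Ldy2 ndy2 Ne by (intro R_bound) auto
  have r7: "\<bar>ip M (Q Xb) e2b\<bar> \<le> C * eps" using Lb Nb Ne by (intro R_bound) auto
  have r8: "\<bar>ip M (Q dx2) e2b\<bar> \<le> (4*C) * eps" using Lb Ldx2 ndx2 Ne by (intro R_bound) auto
  show ?thesis using Ga Gb qa qb Lab r1 r2 r3 r4 r5 r6 r7 r8 by (simp add: algebra_simps abs_le_iff)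
qed

end



primrec AB :: "(('a \<Rightarrow> real) \<Rightarrow> ('a \<Rightarrow> real)) \<Rightarrow> (('a \<Rightarrow> real) \<Rightarrow> ('a \<Rightarrow> real)) \<Rightarrow> ('a \<Rightarrow> real)
   \<Rightarrow> nat \<Rightarrow> ('a \<Rightarrow> real) \<times> ('a \<Rightarrow> real)" where
  "AB P1 P2 u 0 = (u, u)"
| "AB P1 P2 u (Suc n) = (P1 (snd (AB P1 P2 u n)), P2 (fst (AB P1 P2 u n)))"

context qsys begin

lemma geo_bound: fixes lam :: real assumes "0 \<le> lam" "lam < 1" shows "(\<Sum>n<N. lam ^ n) \<le> 1 / (1 - lam)"
proof -
  have "(\<Sum>n<N. lam ^ n) = (1 - lam ^ N) / (1 - lam)" using assms by (simp add: sum_gp_strict)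
  also have "\<dots> \<le> 1 / (1 - lam)" using assms by (intro divide_right_mono) auto
  finally show ?thesis .
qed

context
  fixes P1 P2 u and lam :: real
  assumes g1: "good_op M \<xi> P1" and g2: "good_op M \<xi> P2" and Lu: "L2 M u"
    and lam: "0 \<le> lam" "lam < 1"
begin

abbreviation "A n \<equiv> fst (AB P1 P2 u n)"
abbreviation "B n \<equiv> snd (AB P1 P2 u n)"

lemma AB_L2: "L2 M (A n) \<and> L2 M (B n)"
  by (induction n) (auto simp: Lu L2_P[OF g1] L2_P[OF g2])

lemma AB_nrm: "nrm M (A n) \<le> nrm M u \<and> nrm M (B n) \<le> nrm M u"
proof (induction n)
  case (Suc n)
  then show ?case using nrm_P[OF g1, of "B n"] nrm_P[OF g2, of "A n"] AB_L2[of n] by auto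
qed simp

definition XN where "XN N = (\<lambda>x. \<Sum>n<N. lam ^ n * A n x)"
definition YN where "YN N = (\<lambda>x. \<Sum>n<N. lam ^ n * B n x)"

lemma XN_L2: "L2 M (XN N)" unfolding XN_def using AB_L2 by (intro L2_sum L2_scale) auto
lemma YN_L2: "L2 M (YN N)" unfolding YN_def using AB_L2 by (intro L2_sum L2_scale) auto

lemma XN_nrm: "nrm M (XN N) \<le> nrm M u / (1 - lam)"
proof -
  have "nrm M (XN N) \<le> (\<Sum>n<N. nrm M (\<lambda>x. lam ^ n * A n x))"
    unfolding XN_def using AB_L2 by (intro nrm_sum L2_scale) auto
  also have "\<dots> \<le> (\<Sum>n<N. lam ^ n * nrm M u)"
    using AB_nrm lam by (intro sum_mono) (auto simp: nrm_scale mult_left_mono)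
  also have "\<dots> = (\<Sum>n<N. lam ^ n) * nrm M u" by (simp add: sum_distrib_right)
  also have "\<dots> \<le> (1 / (1 - lam)) * nrm M u"
    using geo_bound[OF lam] nrm_nonneg by (intro mult_right_mono) auto
  finally show ?thesis by simp
qed

lemma YN_nrm: "nrm M (YN N) \<le> nrm M u / (1 - lam)"
proof -
  have "nrm M (YN N) \<le> (\<Sum>n<N. nrm M (\<lambda>x. lam ^ n * B n x))"
    unfolding YN_def using AB_L2 by (intro nrm_sum L2_scale) auto
  also have "\<dots> \<le> (\<Sum>n<N. lam ^ n * nrm M u)"
    using AB_nrm lam by (intro sum_mono) (auto simp: nrm_scale mult_left_mono)
  also have "\<dots> = (\<Sum>n<N. lam ^ n) * nrm M u" by (simp add: sum_distrib_right)
  also have "\<dots> \<le> (1 / (1 - lam)) * nrm M u"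
    using geo_bound[OF lam] nrm_nonneg by (intro mult_right_mono) auto
  finally show ?thesis by simp
qed

definition e1N where "e1N N = (\<lambda>x. - (lam ^ N * A N x))"
definition e2N where "e2N N = (\<lambda>x. - (lam ^ N * B N x))"

lemma e1N_L2: "L2 M (e1N N)" unfolding e1N_def using AB_L2 by (intro L2_uminus L2_scale) auto
lemma e2N_L2: "L2 M (e2N N)" unfolding e2N_def using AB_L2 by (intro L2_uminus L2_scale) auto

lemma e1N_nrm: "nrm M (e1N N) \<le> lam ^ N * nrm M u"
  unfolding e1N_def using AB_nrm lam by (simp add: nrm_uminus nrm_scale mult_left_mono)
lemma e2N_nrm: "nrm M (e2N N) \<le> lam ^ N * nrm M u"
  unfolding e2N_def using AB_nrm lam by (simp add: nrm_uminus nrm_scale mult_left_mono)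

lemma E1N: assumes v: "L2 M v"
  shows "ip M v (XN N) - lam * ip M v (P1 (YN N)) = ip M v u + ip M v (e1N N)"
proof -
  have "ip M v (P1 (YN N)) = ip M (P1 (YN N)) v" by (simp add: ip_sym)
  also have "\<dots> = (\<Sum>n<N. lam ^ n * ip M (P1 (B n)) v)"
    unfolding YN_def using AB_L2 v by (intro ipP_sum[OF g1]) auto
  also have "\<dots> = (\<Sum>n<N. lam ^ n * ip M v (A (Suc n)))" by (simp add: ip_sym)
  finally have a: "lam * ip M v (P1 (YN N)) = (\<Sum>n<N. lam ^ Suc n * ip M v (A (Suc n)))"
    by (simp add: sum_distrib_left mult.assoc)
  have b: "ip M v (XN N) = (\<Sum>n<N. lam ^ n * ip M v (A n))"
    unfolding XN_def using AB_L2 v by (simp add: ip_sum_right L2_scale ip_scale_right)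
  have "ip M v (XN N) - lam * ip M v (P1 (YN N)) = (\<Sum>n<N. lam ^ n * ip M v (A n) - lam ^ Suc n * ip M v (A (Suc n)))"
    unfolding a b by (simp add: sum_subtractf)
  also have "\<dots> = ip M v u - lam ^ N * ip M v (A N)"
    by (subst sum_lessThan_telescope'[where f = "\<lambda>n. lam ^ n * ip M v (A n)"]) simp
  finally show ?thesis unfolding e1N_def by (simp add: ip_uminus_right ip_scale_right)
qed

lemma E2N: assumes v: "L2 M v"
  shows "ip M v (YN N) - lam * ip M v (P2 (XN N)) = ip M v u + ip M v (e2N N)"
proof -
  have "ip M v (P2 (XN N)) = ip M (P2 (XN N)) v" by (simp add: ip_sym)
  also have "\<dots> = (\<Sum>n<N. lam ^ n * ip M (P2 (A n)) v)"
    unfolding XN_def using AB_L2 v by (intro ipP_sum[OF g2]) auto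
  also have "\<dots> = (\<Sum>n<N. lam ^ n * ip M v (B (Suc n)))" by (simp add: ip_sym)
  finally have a: "lam * ip M v (P2 (XN N)) = (\<Sum>n<N. lam ^ Suc n * ip M v (B (Suc n)))"
    by (simp add: sum_distrib_left mult.assoc)
  have b: "ip M v (YN N) = (\<Sum>n<N. lam ^ n * ip M v (B n))"
    unfolding YN_def using AB_L2 v by (simp add: ip_sum_right L2_scale ip_scale_right)
  have "ip M v (YN N) - lam * ip M v (P2 (XN N)) = (\<Sum>n<N. lam ^ n * ip M v (B n) - lam ^ Suc n * ip M v (B (Suc n)))"
    unfolding a b by (simp add: sum_subtractf)
  also have "\<dots> = ip M v u - lam ^ N * ip M v (B N)"
    by (subst sum_lessThan_telescope'[where f = "\<lambda>n. lam ^ n * ip M v (B n)"]) simp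
  finally show ?thesis unfolding e2N_def by (simp add: ip_uminus_right ip_scale_right)
qed

lemma partial_eq: "ip M u (XN N) + ip M u (YN N) = (\<Sum>n<N. lam ^ n * (ip M u (A n) + ip M u (B n)))"
  unfolding XN_def YN_def using AB_L2 Lu
  by (simp add: ip_sum_right L2_scale ip_scale_right sum.distrib distrib_left)

lemma term_bound: "\<bar>lam ^ n * (ip M u (A n) + ip M u (B n))\<bar> \<le> 2 * ip M u u * lam ^ n"
proof -
  have "\<bar>ip M u (A n)\<bar> \<le> nrm M u * nrm M u"
    using ip_CS[OF Lu, of "A n"] AB_L2 AB_nrm[of n] nrm_nonneg[of M u]
    by (meson mult_left_mono order_trans)
  moreover have "\<bar>ip M u (B n)\<bar> \<le> nrm M u * nrm M u"
    using ip_CS[OF Lu, of "B n"] AB_L2 AB_nrm[of n] nrm_nonneg[of M u]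
    by (meson mult_left_mono order_trans)
  ultimately have "\<bar>ip M u (A n) + ip M u (B n)\<bar> \<le> 2 * ip M u u"
    using nrm_sq[of M u] by (simp add: power2_eq_square)
  then show ?thesis using lam
    by (simp add: abs_mult mult.commute mult_left_mono)
qed

lemma summable_terms: "summable (\<lambda>n. lam ^ n * (ip M u (A n) + ip M u (B n)))"
proof (rule summable_comparison_test)
  show "\<exists>N. \<forall>n\<ge>N. norm (lam ^ n * (ip M u (A n) + ip M u (B n))) \<le> 2 * ip M u u * lam ^ n"
    using term_bound by auto
  show "summable (\<lambda>n. 2 * ip M u u * lam ^ n)" using lam
    by (intro summable_mult summable_geometric) auto
qed

end

lemma main_compare:
  assumes g1: "good_op M \<xi> P1" and ga: "good_op M \<xi> Pa" and gb: "good_op M \<xi> Pb"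
    and dir: "\<And>x. L2 M x \<Longrightarrow> ip M (Q x) (Pa x) \<le> ip M (Q x) (Pb x)"
    and lam: "0 \<le> lam" "lam < 1"
    and Lu: "L2 M u" and Qu: "\<And>v. L2 M v \<Longrightarrow> ip M (Q v) u = ip M v u"
  shows "(\<Sum>n. lam ^ n * (ip M u (fst (AB P1 Pa u n)) + ip M u (snd (AB P1 Pa u n))))
      \<le> (\<Sum>n. lam ^ n * (ip M u (fst (AB P1 Pb u n)) + ip M u (snd (AB P1 Pb u n))))"
proof (rule LIMSEQ_le)
  let ?ta = "\<lambda>n. lam ^ n * (ip M u (fst (AB P1 Pa u n)) + ip M u (snd (AB P1 Pa u n)))"
  let ?tb = "\<lambda>n. lam ^ n * (ip M u (fst (AB P1 Pb u n)) + ip M u (snd (AB P1 Pb u n)))"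
  define C where "C = nrm M u / (1 - lam)"
  show "(\<lambda>N. \<Sum>n<N. ?ta n) \<longlonglongrightarrow> (\<Sum>n. ?ta n)"
    using summable_LIMSEQ[OF summable_terms[OF g1 ga Lu lam]] .
  have "(\<lambda>N. (\<Sum>n<N. ?tb n) + 28 * C * (lam ^ N * nrm M u)) \<longlonglongrightarrow> (\<Sum>n. ?tb n) + 28 * C * (0 * nrm M u)"
    using summable_LIMSEQ[OF summable_terms[OF g1 gb Lu lam]] LIMSEQ_power_zero[of lam] lam
    by (intro tendsto_intros) auto
  then show "(\<lambda>N. (\<Sum>n<N. ?tb n) + 28 * C * (lam ^ N * nrm M u)) \<longlonglongrightarrow> (\<Sum>n. ?tb n)" by simp
  show "\<exists>N. \<forall>n\<ge>N. (\<Sum>n<n. ?ta n) \<le> (\<Sum>n<n. ?tb n) + 28 * C * (lam ^ n * nrm M u)"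
  proof (intro exI allI impI)
    fix N :: nat
    have "ip M u (XN P1 Pa u lam N) + ip M u (YN P1 Pa u lam N)
        \<le> ip M u (XN P1 Pb u lam N) + ip M u (YN P1 Pb u lam N) + 28 * C * (lam ^ N * nrm M u)"
    proof (rule compare[OF g1 ga gb dir lam(1) _ Lu Qu])
    qed (use lam in \<open>auto simp: XN_L2[OF g1 ga Lu lam] YN_L2[OF g1 ga Lu lam] e1N_L2[OF g1 ga Lu lam] e2N_L2[OF g1 ga Lu lam]
         XN_L2[OF g1 gb Lu lam] YN_L2[OF g1 gb Lu lam] e1N_L2[OF g1 gb Lu lam] e2N_L2[OF g1 gb Lu lam]
         E1N[OF g1 ga Lu lam] E2N[OF g1 ga Lu lam] E1N[OF g1 gb Lu lam] E2N[OF g1 gb Lu lam]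
         XN_nrm[OF g1 ga Lu lam, folded C_def] YN_nrm[OF g1 ga Lu lam, folded C_def]
         XN_nrm[OF g1 gb Lu lam, folded C_def] YN_nrm[OF g1 gb Lu lam, folded C_def]
         e1N_nrm[OF g1 ga Lu lam] e2N_nrm[OF g1 ga Lu lam] e1N_nrm[OF g1 gb Lu lam] e2N_nrm[OF g1 gb Lu lam]\<close>)
    then show "(\<Sum>n<N. ?ta n) \<le> (\<Sum>n<N. ?tb n) + 28 * C * (lam ^ N * nrm M u)"
      by (simp add: partial_eq[OF g1 ga Lu lam] partial_eq[OF g1 gb Lu lam])
  qed
qed

end



lemma prob_sq_bound:
  fixes f :: "'a \<Rightarrow> real"
  assumes N: "prob_space N" and fm: "f \<in> borel_measurable N"
  shows "ennreal ((\<integral>y. f y \<partial>N)\<^sup>2) \<le> (\<integral>\<^sup>+y. ennreal ((f y)\<^sup>2) \<partial>N)"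
proof (cases "integrable N (\<lambda>y. (f y)\<^sup>2)")
  case True
  interpret prob_space N by fact
  have fi: "integrable N f" using square_integrable_imp_integrable[OF fm True] .
  obtain c where c: "c = (\<integral>y. f y \<partial>N)" by simp
  have "0 \<le> (\<integral>y. (f y - c)\<^sup>2 \<partial>N)" by (rule integral_nonneg_AE) simp
  also have "(\<integral>y. (f y - c)\<^sup>2 \<partial>N) = (\<integral>y. (f y)\<^sup>2 + ((- 2 * c) * f y + c\<^sup>2) \<partial>N)"
    by (rule Bochner_Integration.integral_cong) (simp_all add: power2_diff)
  also have "\<dots> = (\<integral>y. (f y)\<^sup>2 \<partial>N) + (\<integral>y. (- 2 * c) * f y + c\<^sup>2 \<partial>N)"
    using True fi by (intro Bochner_Integration.integral_add) auto
  also have "(\<integral>y. (- 2 * c) * f y + c\<^sup>2 \<partial>N) = (\<integral>y. (- 2 * c) * f y \<partial>N) + (\<integral>y. c\<^sup>2 \<partial>N)"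
    using fi by (intro Bochner_Integration.integral_add) auto
  also have "(\<integral>y. (- 2 * c) * f y \<partial>N) = (- 2 * c) * c" using c by simp
  also have "(\<integral>y. c\<^sup>2 \<partial>N) = c\<^sup>2" by (simp add: prob_space)
  finally have le: "c\<^sup>2 \<le> (\<integral>y. (f y)\<^sup>2 \<partial>N)" by (simp add: power2_eq_square)
  have "(\<integral>\<^sup>+y. ennreal ((f y)\<^sup>2) \<partial>N) = ennreal (\<integral>y. (f y)\<^sup>2 \<partial>N)"
    using True by (intro nn_integral_eq_integral) auto
  then show ?thesis using le c by simp
next
  case False
  have m2: "(\<lambda>y. (f y)\<^sup>2) \<in> borel_measurable N" using fm by measurable
  have "\<not> (\<integral>\<^sup>+y. ennreal (norm ((f y)\<^sup>2)) \<partial>N) < \<infinity>"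
    using False integrableI_bounded[OF m2] by blast
  then have "(\<integral>\<^sup>+y. ennreal ((f y)\<^sup>2) \<partial>N) = \<infinity>" using top.not_eq_extremum by fastforce
  then show ?thesis by simp
qed

context qsys begin

context
  fixes K assumes Km: "K \<in> measurable M (prob_algebra M)"
    and Krev: "reversible M \<xi> (kop K)"
begin

lemma K_sub: "K \<in> measurable M (subprob_algebra M)" using measurable_prob_algebraD[OF Km] .

lemma Kz: "z \<in> space M \<Longrightarrow> prob_space (K z) \<and> sets (K z) = sets M"
  using measurable_space[OF Km] by (auto simp: space_prob_algebra)

lemma kop_meas: "f \<in> borel_measurable M \<Longrightarrow> kop K f \<in> borel_measurable M"
  unfolding kop_def
  using measurable_compose[OF K_sub integral_measurable_subprob_algebra[of f M]] by (simp add: comp_def)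

lemma sp_ne: "space M \<noteq> {}" using prob prob_space.not_empty by blast

lemma kop_one: "z \<in> space M \<Longrightarrow> kop K (\<lambda>_. 1) z = 1"
  using Kz[of z] by (simp add: kop_def prob_space.prob_space)

lemma bind_eq: "bind M K = M"
proof (rule measure_eqI)
  show sets: "sets (bind M K) = sets M" using Kz sp_ne by (intro sets_bind) auto
  fix A assume A: "A \<in> sets (bind M K)"
  then have A': "A \<in> sets M" using sets by simp
  have LA: "L2 M (indicator A :: 'a \<Rightarrow> real)"
    unfolding L2_def using A' prob
    by (auto intro!: finite_measure.integrable_const_bound[where B=1] prob_space.finite_measure
             simp: indicator_def)
  have L1: "L2 M (\<lambda>_. 1::real)" using prob by (intro L2_const prob_space.finite_measure)
  have "ip M (kop K (indicator A)) (\<lambda>_. 1) = ip M (indicator A) (Q (kop K (Q (\<lambda>_. 1))))"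
    using Krev LA L1 unfolding reversible_def Qop_def by auto
  also have "\<dots> = ip M (indicator A) (\<lambda>_. 1)"
  proof (rule ip_cong)
    fix x assume x: "x \<in> space M"
    have "\<xi> x \<in> space M" using measurable_space[OF xi_meas x] .
    then show "Q (kop K (Q (\<lambda>_. 1))) x = 1" by (simp add: Qop_def kop_one)
  qed auto
  also have "\<dots> = measure M A" using A' by (simp add: ip_def)
  finally have eq0: "ip M (kop K (indicator A)) (\<lambda>_. 1) = measure M A" .
  have "ip M (kop K (indicator A)) (\<lambda>_. 1) = (\<integral>z. measure (K z) A \<partial>M)"
    unfolding ip_def kop_def
  proof (rule Bochner_Integration.integral_cong)
    fix z assume z: "z \<in> space M"
    have "A \<subseteq> space (K z)" using Kz[OF z] A' sets.sets_into_space sets_eq_imp_space_eq by metis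
    then show "(\<integral>y. indicator A y \<partial>K z) * 1 = measure (K z) A" by (simp add: Int_absorb2)
  qed simp
  with eq0 have eq: "(\<integral>z. measure (K z) A \<partial>M) = measure M A" by simp
  have mm: "(\<lambda>z. measure (K z) A) \<in> borel_measurable M"
    using measurable_compose[OF K_sub measurable_measure_subprob_algebra[OF A']] by (simp add: comp_def)
  have int: "integrable M (\<lambda>z. measure (K z) A)"
    using prob mm
    by (intro finite_measure.integrable_const_bound[where B=1] prob_space.finite_measure)
       (auto intro!: AE_I2 dest: Kz simp: prob_space.prob_le_1)
  have "emeasure (bind M K) A = (\<integral>\<^sup>+z. emeasure (K z) A \<partial>M)"
    using emeasure_bind[OF sp_ne K_sub A'] .
  also have "\<dots> = (\<integral>\<^sup>+z. ennreal (measure (K z) A) \<partial>M)"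
    by (intro nn_integral_cong) (auto dest!: Kz simp: finite_measure.emeasure_eq_measure[OF prob_space.finite_measure])
  also have "\<dots> = ennreal (measure M A)"
    using nn_integral_eq_integral[OF int] eq by auto
  also have "\<dots> = emeasure M A" using prob by (simp add: finite_measure.emeasure_eq_measure[OF prob_space.finite_measure])
  finally show "emeasure (bind M K) A = emeasure M A" .
qed

lemma kop_nn_contr: assumes fm: "f \<in> borel_measurable M"
  shows "(\<integral>\<^sup>+z. ennreal ((kop K f z)\<^sup>2) \<partial>M) \<le> (\<integral>\<^sup>+y. ennreal ((f y)\<^sup>2) \<partial>M)"
proof -
  have "(\<integral>\<^sup>+z. ennreal ((kop K f z)\<^sup>2) \<partial>M) \<le> (\<integral>\<^sup>+z. (\<integral>\<^sup>+y. ennreal ((f y)\<^sup>2) \<partial>K z) \<partial>M)"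
  proof (intro nn_integral_mono)
    fix z assume z: "z \<in> space M"
    have "f \<in> borel_measurable (K z)" using fm Kz[OF z] by (simp cong: measurable_cong_sets)
    then show "ennreal ((kop K f z)\<^sup>2) \<le> (\<integral>\<^sup>+y. ennreal ((f y)\<^sup>2) \<partial>K z)"
      unfolding kop_def using prob_sq_bound Kz[OF z] by blast
  qed
  also have "\<dots> = (\<integral>\<^sup>+y. ennreal ((f y)\<^sup>2) \<partial>(bind M K))"
    using fm by (intro nn_integral_bind[symmetric, OF _ K_sub]) auto
  also have "\<dots> = (\<integral>\<^sup>+y. ennreal ((f y)\<^sup>2) \<partial>M)" by (simp add: bind_eq)
  finally show ?thesis .
qed

lemma kop_L2: assumes f: "L2 M f" shows "L2 M (kop K f)"
proof -
  have fm: "f \<in> borel_measurable M" using f by (simp add: L2_def)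
  have "(\<integral>\<^sup>+y. ennreal ((f y)\<^sup>2) \<partial>M) = ennreal (\<integral>y. (f y)\<^sup>2 \<partial>M)"
    using f by (intro nn_integral_eq_integral) (auto simp: L2_def)
  then have le: "(\<integral>\<^sup>+z. ennreal ((kop K f z)\<^sup>2) \<partial>M) \<le> ennreal (\<integral>y. (f y)\<^sup>2 \<partial>M)"
    using kop_nn_contr[OF fm] by simp
  have "ennreal (\<integral>y. (f y)\<^sup>2 \<partial>M) < \<infinity>" by simp
  with le have "(\<integral>\<^sup>+z. ennreal ((kop K f z)\<^sup>2) \<partial>M) < \<infinity>" by (rule le_less_trans)
  then have "integrable M (\<lambda>z. (kop K f z)\<^sup>2)"
    using kop_meas[OF fm] by (intro integrableI_bounded) auto
  then show ?thesis using kop_meas[OF fm] by (simp add: L2_def)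
qed

lemma kop_good: "good_op M \<xi> (kop K)"
  unfolding good_op_def
proof (intro conjI allI impI)
  fix f assume f: "L2 M f"
  show "L2 M (kop K f)" using kop_L2[OF f] .
next
  fix f g assume "L2 M f" "L2 M g"
  then show "ip M (kop K f) g = ip M f (Qop \<xi> (kop K (Qop \<xi> g)))"
    using Krev unfolding reversible_def Qop_def by auto
next
  fix f assume f: "L2 M f"
  have fm: "f \<in> borel_measurable M" using f by (simp add: L2_def)
  have kf: "L2 M (kop K f)" using kop_L2[OF f] .
  have "ennreal (ip M (kop K f) (kop K f)) = ennreal (\<integral>z. (kop K f z)\<^sup>2 \<partial>M)"
    by (simp add: ip_def power2_eq_square)
  also have "\<dots> = (\<integral>\<^sup>+z. ennreal ((kop K f z)\<^sup>2) \<partial>M)"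
    using kf unfolding L2_def by (intro nn_integral_eq_integral[symmetric]) auto
  also have "\<dots> \<le> (\<integral>\<^sup>+y. ennreal ((f y)\<^sup>2) \<partial>M)" by (rule kop_nn_contr[OF fm])
  also have "\<dots> = ennreal (\<integral>z. (f z)\<^sup>2 \<partial>M)"
    using f unfolding L2_def by (intro nn_integral_eq_integral) auto
  also have "\<dots> = ennreal (ip M f f)" by (simp add: ip_def power2_eq_square)
  finally show "ip M (kop K f) (kop K f) \<le> ip M f f"
    using ip_self_nonneg[of M f] by (simp add: ennreal_le_iff)
qed

end

end



locale psys = qsys +
  fixes \<psi> :: "'a \<Rightarrow> 'a"
  assumes psi_meas: "\<psi> \<in> measurable M M"
    and psi_bij: "bij_betw \<psi> (space M) (space M)"
    and psi_inv: "\<forall>x\<in>space M. the_inv_into (space M) \<psi> x = \<xi> (\<psi> (\<xi> x))"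
begin

abbreviation "\<tau> \<equiv> \<xi> \<circ> \<psi>"

lemma xi_sp: "x \<in> space M \<Longrightarrow> \<xi> x \<in> space M" using measurable_space[OF xi_meas] .
lemma psi_sp: "x \<in> space M \<Longrightarrow> \<psi> x \<in> space M" using measurable_space[OF psi_meas] .
lemma tau_meas: "\<tau> \<in> measurable M M" using measurable_comp[OF psi_meas xi_meas] .
lemma tau_sp: "x \<in> space M \<Longrightarrow> \<tau> x \<in> space M" by (simp add: xi_sp psi_sp)

lemma psi_xi_psi: assumes z: "z \<in> space M" shows "\<psi> (\<xi> (\<psi> z)) = \<xi> z"
proof -
  have x: "\<xi> z \<in> space M" using xi_sp[OF z] .
  have inj: "inj_on \<psi> (space M)" and img: "\<psi> ` space M = space M"
    using psi_bij by (auto simp: bij_betw_def)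
  have "\<psi> (the_inv_into (space M) \<psi> (\<xi> z)) = \<xi> z"
    using f_the_inv_into_f[OF inj] x img by auto
  then show ?thesis using psi_inv x xi_inv z by simp
qed

lemma tau_tau: "z \<in> space M \<Longrightarrow> \<tau> (\<tau> z) = z"
  using psi_xi_psi xi_inv by (simp add: psi_sp)

lemma tau_tau': "z \<in> space M \<Longrightarrow> \<xi> (\<psi> (\<xi> (\<psi> z))) = z"
  using tau_tau by simp

definition "NN = distr M M \<tau>"
definition "nu = measure_add M NN"

lemma sets_NN[simp]: "sets NN = sets M" by (simp add: NN_def)
lemma space_NN[simp]: "space NN = space M" by (simp add: NN_def)

lemma emeasure_NN: "S \<in> sets M \<Longrightarrow> emeasure NN S = emeasure M (\<tau> -` S \<inter> space M)"
  unfolding NN_def by (rule emeasure_distr[OF tau_meas])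

lemma nu_emeasure: assumes S: "S \<in> sets M" shows "emeasure nu S = emeasure M S + emeasure NN S"
  unfolding nu_def measure_add_def
proof (rule emeasure_measure_of_sigma[OF _ _ _ S])
  show "sigma_algebra (space M) (sets M)" by (rule sets.sigma_algebra_axioms)
  show "positive (sets M) (\<lambda>S. emeasure M S + emeasure NN S)" by (simp add: positive_def)
  show "countably_additive (sets M) (\<lambda>S. emeasure M S + emeasure NN S)"
    unfolding countably_additive_def
  proof (intro allI impI)
    fix F :: "nat \<Rightarrow> 'a set" assume F: "range F \<subseteq> sets M" "disjoint_family F" "\<Union> (range F) \<in> sets M"
    have "(\<Sum>i. emeasure M (F i) + emeasure NN (F i)) = (\<Sum>i. emeasure M (F i)) + (\<Sum>i. emeasure NN (F i))"
      by (rule suminf_add[symmetric]) auto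
    also have "\<dots> = emeasure M (\<Union>i. F i) + emeasure NN (\<Union>i. F i)"
      using F by (simp add: suminf_emeasure)
    finally show "(\<Sum>i. emeasure M (F i) + emeasure NN (F i)) = emeasure M (\<Union> (range F)) + emeasure NN (\<Union> (range F))" .
  qed
qed

lemma sets_nu[simp]: "sets nu = sets M" unfolding nu_def measure_add_def by (rule sets.sets_measure_of_eq)
lemma space_nu[simp]: "space nu = space M" unfolding nu_def measure_add_def by (rule sets.space_measure_of_eq)

lemma meas_nu[simp]: "measurable nu = measurable M" "measurable X nu = measurable X M"
  by (auto intro!: ext simp: measurable_def)

lemma nu_finite: "finite_measure nu"
proof (rule finite_measureI)
  have "emeasure nu (space nu) = emeasure M (space M) + emeasure NN (space M)"
    by (simp add: nu_emeasure)
  moreover have "emeasure NN (space M) = emeasure M (space M)"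
  proof -
    have "\<tau> -` space M \<inter> space M = space M" using tau_sp by auto
    then show ?thesis using emeasure_NN[of "space M"] by simp
  qed
  ultimately show "emeasure nu (space nu) \<noteq> \<infinity>"
    using prob by (simp add: prob_space.emeasure_space_1)
qed

lemma nu_sf: "sigma_finite_measure nu"
  using nu_finite by (simp add: finite_measure.axioms(1) finite_measure_def)

lemma ac_M: "absolutely_continuous nu M"
  unfolding absolutely_continuous_def
proof
  fix S assume "S \<in> null_sets nu"
  then have S: "S \<in> sets M" "emeasure nu S = 0" by auto
  then show "S \<in> null_sets M" using nu_emeasure[OF S(1)] by auto
qed

lemma ac_NN: "absolutely_continuous nu NN"
  unfolding absolutely_continuous_def
proof
  fix S assume "S \<in> null_sets nu"
  then have S: "S \<in> sets M" "emeasure nu S = 0" by auto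
  then show "S \<in> null_sets NN" using nu_emeasure[OF S(1)] by auto
qed

lemma tau_preimage: assumes "S \<in> sets M" shows "\<tau> -` (\<tau> -` S \<inter> space M) \<inter> space M = S"
proof -
  have sub: "S \<subseteq> space M" using sets.sets_into_space[OF assms] .
  show ?thesis
  proof (intro set_eqI iffI)
    fix x assume "x \<in> \<tau> -` (\<tau> -` S \<inter> space M) \<inter> space M"
    then have "x \<in> space M" "\<tau> (\<tau> x) \<in> S" by auto
    then show "x \<in> S" using tau_tau by simp
  next
    fix x assume x: "x \<in> S"
    then have xs: "x \<in> space M" using sub by auto
    then have "\<tau> (\<tau> x) \<in> S" using tau_tau x by simp
    then show "x \<in> \<tau> -` (\<tau> -` S \<inter> space M) \<inter> space M" using xs tau_sp[OF xs] by simp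
  qed
qed

lemma distr_nu: "distr nu nu \<tau> = nu"
proof (rule measure_eqI)
  show "sets (distr nu nu \<tau>) = sets nu" by simp
  fix S assume "S \<in> sets (distr nu nu \<tau>)"
  then have S: "S \<in> sets M" by simp
  have tA: "\<tau> -` S \<inter> space M \<in> sets M" using tau_meas S by (rule measurable_sets)
  have "emeasure (distr nu nu \<tau>) S = emeasure nu (\<tau> -` S \<inter> space M)"
    using S tau_meas by (simp add: emeasure_distr)
  also have "\<dots> = emeasure M (\<tau> -` S \<inter> space M) + emeasure NN (\<tau> -` S \<inter> space M)"
    using nu_emeasure[OF tA] .
  also have "\<dots> = emeasure NN S + emeasure M S"
    using emeasure_NN[OF S] emeasure_NN[OF tA] tau_preimage[OF S] by simp
  also have "\<dots> = emeasure nu S" using nu_emeasure[OF S] by (simp add: add.commute)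
  finally show "emeasure (distr nu nu \<tau>) S = emeasure nu S" .
qed

lemma distr_M_nu: "distr M nu \<tau> = NN"
  unfolding NN_def by (rule distr_cong) auto

lemma distr_NN_nu: "distr NN nu \<tau> = M"
proof -
  have "distr NN nu \<tau> = distr NN M \<tau>" by (rule distr_cong) auto
  also have "\<dots> = distr M M (\<tau> \<circ> \<tau>)" unfolding NN_def using tau_meas by (simp add: distr_distr)
  also have "\<dots> = distr M M (\<lambda>x. x)" by (rule distr_cong) (auto simp: tau_tau')
  also have "\<dots> = M" by (rule distr_id)
  finally show ?thesis .
qed

abbreviation "d1 \<equiv> RN_deriv nu M"
abbreviation "d2 \<equiv> RN_deriv nu NN"

lemma d1_meas[measurable]: "d1 \<in> borel_measurable M"
  using borel_measurable_RN_deriv[of nu M] by simp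
lemma d2_meas[measurable]: "d2 \<in> borel_measurable M"
  using borel_measurable_RN_deriv[of nu NN] by simp

lemma AE_d1_tau: "AE x in nu. d2 (\<tau> x) = d1 x"
proof -
  interpret sigma_finite_measure nu by (rule nu_sf)
  have "AE x in nu. RN_deriv (distr nu nu \<tau>) (distr M nu \<tau>) (\<tau> x) = RN_deriv nu M x"
    by (rule RN_deriv_distr[where T'="\<tau>"]) (auto simp: tau_meas tau_tau' distr_nu distr_M_nu ac_NN)
  then show ?thesis by (simp add: distr_nu distr_M_nu)
qed

lemma AE_d2_tau: "AE x in nu. d1 (\<tau> x) = d2 x"
proof -
  interpret sigma_finite_measure nu by (rule nu_sf)
  have "AE x in nu. RN_deriv (distr nu nu \<tau>) (distr NN nu \<tau>) (\<tau> x) = RN_deriv nu NN x"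
    by (rule RN_deriv_distr[where T'="\<tau>"]) (auto simp: tau_meas tau_tau' distr_nu distr_NN_nu ac_M)
  then show ?thesis by (simp add: distr_nu distr_NN_nu)
qed

lemma dens_M: "density nu d1 = M"
proof -
  interpret sigma_finite_measure nu by (rule nu_sf)
  show ?thesis by (rule density_RN_deriv[OF ac_M]) simp
qed

definition RR :: "ennreal \<Rightarrow> ennreal \<Rightarrow> real" where
  "RR a b = (if 0 < a \<and> a < \<infinity> \<and> 0 < b \<and> b < \<infinity> then enn2real b / enn2real a else 0)"

lemma ratio_RR: "ratio M \<xi> \<psi> z = RR (d1 z) (d2 z)"
  unfolding ratio_def RR_def Let_def NN_def nu_def comp_def by simp

lemma RR_nonneg: "0 \<le> RR a b" by (simp add: RR_def)

lemma RR_swap: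
  assumes adm: "admissible \<phi>"
  shows "b * ennreal (\<phi> (RR b a)) = a * ennreal (\<phi> (RR a b))"
proof (cases "0 < a \<and> a < \<infinity> \<and> 0 < b \<and> b < \<infinity>")
  case True
  define a' where "a' = enn2real a"
  define b' where "b' = enn2real b"
  have a: "a = ennreal a'" "0 < a'" using True unfolding a'_def
    by (auto simp: enn2real_positive_iff ennreal_enn2real_if)
  have b: "b = ennreal b'" "0 < b'" using True unfolding b'_def
    by (auto simp: enn2real_positive_iff ennreal_enn2real_if)
  have r1: "RR b a = a' / b'" using True unfolding RR_def a'_def b'_def by auto
  have r2: "RR a b = b' / a'" using True unfolding RR_def a'_def b'_def by auto
  have phin: "\<And>t. 0 \<le> t \<Longrightarrow> 0 \<le> \<phi> t" using adm by (simp add: admissible_def)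
  have "(b' / a') * \<phi> (1 / (b' / a')) = \<phi> (b' / a')"
    using adm a(2) b(2) unfolding admissible_def by (metis divide_pos_pos)
  then have "(b' / a') * \<phi> (a' / b') = \<phi> (b' / a')" by simp
  then have key: "b' * \<phi> (a' / b') = a' * \<phi> (b' / a')"
    using a(2) by (simp add: field_simps)
  have p1: "0 \<le> \<phi> (a' / b')" using a(2) b(2) by (intro phin) simp
  have p2: "0 \<le> \<phi> (b' / a')" using a(2) b(2) by (intro phin) simp
  have "b * ennreal (\<phi> (RR b a)) = ennreal b' * ennreal (\<phi> (a' / b'))"
    by (simp only: r1 b(1)[symmetric])
  also have "\<dots> = ennreal (b' * \<phi> (a' / b'))" using b(2) p1 by (simp add: ennreal_mult)
  also have "\<dots> = ennreal (a' * \<phi> (b' / a'))" using key by simp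
  also have "\<dots> = ennreal a' * ennreal (\<phi> (b' / a'))" using a(2) p2 by (simp add: ennreal_mult)
  also have "\<dots> = a * ennreal (\<phi> (RR a b))"
    by (simp only: r2 a(1)[symmetric])
  finally show ?thesis .
next
  case False
  then have "\<not> (0 < b \<and> b < \<infinity> \<and> 0 < a \<and> a < \<infinity>)" by auto
  then have "RR b a = 0" "RR a b = 0" using False by (auto simp: RR_def)
  then show ?thesis using adm by (simp add: admissible_def)
qed

end



context psys begin

lemma RR_meas[measurable]: "(\<lambda>z. RR (d1 z) (d2 z)) \<in> borel_measurable M"
  unfolding RR_def by measurable

lemma ratio_meas: "(\<lambda>z. ratio M \<xi> \<psi> z) \<in> borel_measurable M"
  unfolding ratio_RR by (rule RR_meas)

lemma ratio_nonneg: "0 \<le> ratio M \<xi> \<psi> z" unfolding ratio_RR by (rule RR_nonneg)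

context
  fixes \<phi> assumes adm: "admissible \<phi>"
begin

definition "w z = \<phi> (ratio M \<xi> \<psi> z)"

lemma w_meas[measurable]: "w \<in> borel_measurable M"
proof -
  have "\<phi> \<in> borel_measurable borel" using adm by (simp add: admissible_def)
  then show ?thesis unfolding w_def by (rule measurable_compose[OF ratio_meas])
qed

lemma w_nonneg: "0 \<le> w z" using adm ratio_nonneg by (simp add: w_def admissible_def)
lemma w_le1: "w z \<le> 1" using adm ratio_nonneg by (simp add: w_def admissible_def)

lemma w_RR: "w z = \<phi> (RR (d1 z) (d2 z))" by (simp add: w_def ratio_RR)

lemma inv_nn:
  fixes h :: "'a \<Rightarrow> ennreal"
  assumes hm[measurable]: "h \<in> borel_measurable M"
  shows "(\<integral>\<^sup>+z. ennreal (w z) * h (\<tau> z) \<partial>M) = (\<integral>\<^sup>+z. ennreal (w z) * h z \<partial>M)"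
proof -
  have tm[measurable]: "\<tau> \<in> measurable M M" by (rule tau_meas)
  have hm2: "(\<lambda>z. h (\<tau> z)) \<in> borel_measurable M" using measurable_compose[OF tm hm] by (simp add: comp_def)
  define G where "G z = d1 z * (ennreal (w z) * h (\<tau> z))" for z
  have Gm: "G \<in> borel_measurable M" unfolding G_def using hm2 by measurable
  have "(\<integral>\<^sup>+z. ennreal (w z) * h (\<tau> z) \<partial>M) = (\<integral>\<^sup>+z. ennreal (w z) * h (\<tau> z) \<partial>density nu d1)"
    by (simp add: dens_M)
  also have "\<dots> = (\<integral>\<^sup>+z. G z \<partial>nu)"
    unfolding G_def using hm2 by (subst nn_integral_density) auto
  also have "\<dots> = (\<integral>\<^sup>+z. G z \<partial>distr nu nu \<tau>)" by (simp add: distr_nu)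
  also have "\<dots> = (\<integral>\<^sup>+y. G (\<tau> y) \<partial>nu)"
    using Gm by (intro nn_integral_distr) auto
  also have "\<dots> = (\<integral>\<^sup>+y. d1 y * (ennreal (w y) * h y) \<partial>nu)"
  proof (rule nn_integral_cong_AE)
    have sp: "AE y in nu. y \<in> space M" by (rule AE_I2) simp
    show "AE y in nu. G (\<tau> y) = d1 y * (ennreal (w y) * h y)"
      using AE_d1_tau AE_d2_tau sp
    proof eventually_elim
      case (elim y)
      have "G (\<tau> y) = d1 (\<tau> y) * ennreal (\<phi> (RR (d1 (\<tau> y)) (d2 (\<tau> y)))) * h (\<tau> (\<tau> y))"
        unfolding G_def w_RR by (simp add: mult.assoc)
      also have "\<dots> = d2 y * ennreal (\<phi> (RR (d2 y) (d1 y))) * h y"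
        using elim tau_tau by simp
      also have "\<dots> = d1 y * ennreal (\<phi> (RR (d1 y) (d2 y))) * h y"
        using RR_swap[OF adm, of "d2 y" "d1 y"] by simp
      finally show ?case unfolding w_RR by (simp add: mult.assoc)
    qed
  qed
  also have "\<dots> = (\<integral>\<^sup>+z. ennreal (w z) * h z \<partial>density nu d1)"
    using hm by (subst nn_integral_density) auto
  also have "\<dots> = (\<integral>\<^sup>+z. ennreal (w z) * h z \<partial>M)" by (simp add: dens_M)
  finally show ?thesis .
qed

definition "mw = density M (\<lambda>z. ennreal (w z))"

lemma sets_mw[simp]: "sets mw = sets M" by (simp add: mw_def)
lemma space_mw[simp]: "space mw = space M" by (simp add: mw_def)
lemma meas_mw[simp]: "measurable mw = measurable M" "measurable X mw = measurable X M"
  by (auto intro!: ext simp: measurable_def)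

lemma distr_mw: "distr mw M \<tau> = mw"
proof (rule measure_eqI)
  show "sets (distr mw M \<tau>) = sets mw" by simp
  fix S assume "S \<in> sets (distr mw M \<tau>)"
  then have S[measurable]: "S \<in> sets M" by simp
  have tS: "\<tau> -` S \<inter> space M \<in> sets M" using tau_meas S by (rule measurable_sets)
  have tmw: "\<tau> \<in> measurable mw M" unfolding meas_mw by (rule tau_meas)
  have "emeasure (distr mw M \<tau>) S = emeasure mw (\<tau> -` S \<inter> space M)"
    using emeasure_distr[OF tmw S] by simp
  also have "\<dots> = (\<integral>\<^sup>+z. ennreal (w z) * indicator (\<tau> -` S \<inter> space M) z \<partial>M)"
    unfolding mw_def using tS by (subst emeasure_density) auto
  also have "\<dots> = (\<integral>\<^sup>+z. ennreal (w z) * indicator S (\<tau> z) \<partial>M)"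
    by (intro nn_integral_cong) (auto simp: indicator_def)
  also have "\<dots> = (\<integral>\<^sup>+z. ennreal (w z) * indicator S z \<partial>M)"
    by (rule inv_nn) simp
  also have "\<dots> = emeasure mw S"
    unfolding mw_def by (subst emeasure_density) auto
  finally show "emeasure (distr mw M \<tau>) S = emeasure mw S" .
qed

lemma L2_mw: assumes f: "L2 M f" shows "L2 mw f"
proof -
  have fm[measurable]: "f \<in> borel_measurable M" using f by (simp add: L2_def)
  have "integrable M (\<lambda>z. w z *\<^sub>R (f z)\<^sup>2)"
  proof (rule Bochner_Integration.integrable_bound)
    show "integrable M (\<lambda>z. (f z)\<^sup>2)" using f by (simp add: L2_def)
    show "(\<lambda>z. w z *\<^sub>R (f z)\<^sup>2) \<in> borel_measurable M" by measurable
    show "AE x in M. norm (w x *\<^sub>R (f x)\<^sup>2) \<le> norm ((f x)\<^sup>2)"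
      using w_nonneg w_le1 by (auto intro!: AE_I2 mult_left_le_one_le)
  qed
  then have "integrable mw (\<lambda>z. (f z)\<^sup>2)"
    unfolding mw_def by (subst integrable_density) (auto simp: w_nonneg)
  then show ?thesis by (simp add: L2_def)
qed

lemma L2_mw_tau: assumes f: "L2 mw f" shows "L2 mw (\<lambda>z. f (\<tau> z))"
proof -
  have fm[measurable]: "f \<in> borel_measurable M" using f by (simp add: L2_def)
  have tm[measurable]: "\<tau> \<in> measurable mw M" unfolding meas_mw by (rule tau_meas)
  have "integrable (distr mw M \<tau>) (\<lambda>z. (f z)\<^sup>2)" using f distr_mw by (simp add: L2_def)
  moreover have f2: "(\<lambda>z. (f z)\<^sup>2) \<in> borel_measurable M" by measurable
  ultimately have "integrable mw (\<lambda>z. (f (\<tau> z))\<^sup>2)" using integrable_distr_eq[OF tm f2] by simp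
  moreover have "(\<lambda>z. f (\<tau> z)) \<in> borel_measurable M" using measurable_compose[OF tau_meas fm] by (simp add: comp_def)
  ultimately show ?thesis by (simp add: L2_def)
qed

lemma integral_mw_tau: assumes fm: "f \<in> borel_measurable M"
  shows "(\<integral>z. f (\<tau> z) \<partial>mw) = (\<integral>z. (f z :: real) \<partial>mw)"
proof -
  have "(\<integral>z. f z \<partial>mw) = (\<integral>z. f z \<partial>distr mw M \<tau>)" by (simp add: distr_mw)
  also have "\<dots> = (\<integral>z. f (\<tau> z) \<partial>mw)" using tau_meas fm by (intro integral_distr) auto
  finally show ?thesis by simp
qed

lemma integral_mw: assumes fm: "f \<in> borel_measurable M"
  shows "(\<integral>z. f z \<partial>mw) = (\<integral>z. w z * (f z :: real) \<partial>M)"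
  unfolding mw_def using fm by (subst integral_density) (auto simp: w_nonneg)

lemma integrable_mw: assumes fm: "f \<in> borel_measurable M" and i: "integrable mw f"
  shows "integrable M (\<lambda>z. w z * (f z :: real))"
  using i fm unfolding mw_def by (subst (asm) integrable_density) (auto simp: w_nonneg)

abbreviation "P \<equiv> P2op M \<xi> \<psi> \<phi>"

lemma P_eq: "P f z = w z * f (\<psi> z) + (1 - w z) * f (\<xi> z)"
  by (simp add: P2op_def w_def)

lemma T_gen: assumes Fm: "F \<in> borel_measurable M"
  shows "(\<integral>z. w z * F (\<tau> z) \<partial>M) = (\<integral>z. w z * (F z :: real) \<partial>M)"
proof -
  have Ft: "(\<lambda>z. F (\<tau> z)) \<in> borel_measurable M" using measurable_compose[OF tau_meas Fm] by (simp add: comp_def)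
  have "(\<integral>z. w z * F (\<tau> z) \<partial>M) = (\<integral>z. F (\<tau> z) \<partial>mw)" using integral_mw[OF Ft] by simp
  also have "\<dots> = (\<integral>z. F z \<partial>mw)" by (rule integral_mw_tau[OF Fm])
  also have "\<dots> = (\<integral>z. w z * F z \<partial>M)" by (rule integral_mw[OF Fm])
  finally show ?thesis .
qed

lemma L2_mw_psi: assumes f: "L2 M f" shows "L2 mw (\<lambda>z. f (\<psi> z))"
proof -
  have "L2 mw (\<lambda>z. Q f (\<tau> z))" using L2_mw_tau[OF L2_mw[OF L2_Q[OF f]]] .
  then show ?thesis
    by (rule L2_cong) (simp add: Qop_def xi_inv psi_sp)
qed

lemma L2_mw_xi: assumes f: "L2 M f" shows "L2 mw (\<lambda>z. f (\<xi> z))"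
  using L2_mw[OF L2_Q[OF f]] by (simp add: Qop_def)

lemma int_w: assumes "L2 mw f" "L2 mw g"
  shows "integrable M (\<lambda>z. w z * (f z * g z))"
proof (rule integrable_mw)
  show "(\<lambda>z. f z * g z) \<in> borel_measurable M" using assms by (simp add: L2_def borel_measurable_times)
  show "integrable mw (\<lambda>z. f z * g z)" by (rule L2_mult_integrable[OF assms])
qed

lemma convex_sq: fixes a b t :: real assumes "0 \<le> t" "t \<le> 1"
  shows "(t * a + (1 - t) * b)\<^sup>2 \<le> t * a\<^sup>2 + (1 - t) * b\<^sup>2"
proof -
  have "t * a\<^sup>2 + (1 - t) * b\<^sup>2 - (t * a + (1 - t) * b)\<^sup>2 = t * (1 - t) * (a - b)\<^sup>2"
    by (simp add: power2_eq_square algebra_simps)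
  moreover have "0 \<le> t * (1 - t) * (a - b)\<^sup>2" using assms by simp
  ultimately show ?thesis by simp
qed

lemma P_meas: assumes fm: "f \<in> borel_measurable M" shows "P f \<in> borel_measurable M"
proof -
  have a: "(\<lambda>z. f (\<psi> z)) \<in> borel_measurable M" using measurable_compose[OF psi_meas fm] by (simp add: comp_def)
  have b: "(\<lambda>z. f (\<xi> z)) \<in> borel_measurable M" using measurable_compose[OF xi_meas fm] by (simp add: comp_def)
  show ?thesis unfolding P2op_def w_def[symmetric] using a b by measurable
qed

lemma P_nn_contr: assumes f: "L2 M f"
  shows "(\<integral>\<^sup>+z. ennreal ((P f z)\<^sup>2) \<partial>M) \<le> (\<integral>\<^sup>+z. ennreal ((f z)\<^sup>2) \<partial>M)"
proof -
  have fm[measurable]: "f \<in> borel_measurable M" using f by (simp add: L2_def)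
  define h where "h = Q f"
  have hm[measurable]: "h \<in> borel_measurable M" using L2_Q[OF f] by (simp add: h_def L2_def)
  have h2m: "(\<lambda>z. ennreal ((h z)\<^sup>2)) \<in> borel_measurable M" by measurable
  have "(\<integral>\<^sup>+z. ennreal ((P f z)\<^sup>2) \<partial>M) \<le>
      (\<integral>\<^sup>+z. ennreal (w z) * ennreal ((h (\<tau> z))\<^sup>2) + ennreal (1 - w z) * ennreal ((h z)\<^sup>2) \<partial>M)"
  proof (rule nn_integral_mono)
    fix z assume z: "z \<in> space M"
    have e1: "h (\<tau> z) = f (\<psi> z)" using z by (simp add: h_def Qop_def xi_inv psi_sp)
    have e2: "h z = f (\<xi> z)" by (simp add: h_def Qop_def)
    have "(P f z)\<^sup>2 \<le> w z * (h (\<tau> z))\<^sup>2 + (1 - w z) * (h z)\<^sup>2"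
      unfolding P_eq e1 e2 using w_nonneg w_le1 by (rule convex_sq)
    then show "ennreal ((P f z)\<^sup>2) \<le> ennreal (w z) * ennreal ((h (\<tau> z))\<^sup>2) + ennreal (1 - w z) * ennreal ((h z)\<^sup>2)"
      using w_nonneg[of z] w_le1[of z]
      by (simp add: ennreal_mult[symmetric] ennreal_plus[symmetric] del: ennreal_plus)
  qed
  also have "\<dots> = (\<integral>\<^sup>+z. ennreal (w z) * ennreal ((h (\<tau> z))\<^sup>2) \<partial>M) + (\<integral>\<^sup>+z. ennreal (1 - w z) * ennreal ((h z)\<^sup>2) \<partial>M)"
  proof (rule nn_integral_add)
    have "(\<lambda>z. ennreal ((h (\<tau> z))\<^sup>2)) \<in> borel_measurable M"
      using measurable_compose[OF tau_meas h2m] by (simp add: comp_def)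
    then show "(\<lambda>z. ennreal (w z) * ennreal ((h (\<tau> z))\<^sup>2)) \<in> borel_measurable M" by measurable
  qed measurable
  also have "(\<integral>\<^sup>+z. ennreal (w z) * ennreal ((h (\<tau> z))\<^sup>2) \<partial>M) = (\<integral>\<^sup>+z. ennreal (w z) * ennreal ((h z)\<^sup>2) \<partial>M)"
    using inv_nn[OF h2m] by simp
  also have "(\<integral>\<^sup>+z. ennreal (w z) * ennreal ((h z)\<^sup>2) \<partial>M) + (\<integral>\<^sup>+z. ennreal (1 - w z) * ennreal ((h z)\<^sup>2) \<partial>M)
      = (\<integral>\<^sup>+z. ennreal (w z) * ennreal ((h z)\<^sup>2) + ennreal (1 - w z) * ennreal ((h z)\<^sup>2) \<partial>M)"
    by (rule nn_integral_add[symmetric]) measurable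
  also have "\<dots> = (\<integral>\<^sup>+z. ennreal ((h z)\<^sup>2) \<partial>M)"
  proof (rule nn_integral_cong)
    fix z
    have "ennreal (w z) * ennreal ((h z)\<^sup>2) + ennreal (1 - w z) * ennreal ((h z)\<^sup>2)
        = ennreal (w z * (h z)\<^sup>2 + (1 - w z) * (h z)\<^sup>2)"
      using w_nonneg[of z] w_le1[of z] by (simp add: ennreal_mult[symmetric] ennreal_plus[symmetric] del: ennreal_plus)
    then show "ennreal (w z) * ennreal ((h z)\<^sup>2) + ennreal (1 - w z) * ennreal ((h z)\<^sup>2) = ennreal ((h z)\<^sup>2)"
      by (simp add: algebra_simps)
  qed
  also have "\<dots> = (\<integral>\<^sup>+z. ennreal ((f z)\<^sup>2) \<partial>distr M M \<xi>)"
    unfolding h_def Qop_def by (subst nn_integral_distr[OF xi_meas]) auto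
  also have "\<dots> = (\<integral>\<^sup>+z. ennreal ((f z)\<^sup>2) \<partial>M)" by (simp add: xi_pres)
  finally show ?thesis .
qed

lemma P_L2: assumes f: "L2 M f" shows "L2 M (P f)"
proof -
  have fm: "f \<in> borel_measurable M" using f by (simp add: L2_def)
  have "(\<integral>\<^sup>+y. ennreal ((f y)\<^sup>2) \<partial>M) = ennreal (\<integral>y. (f y)\<^sup>2 \<partial>M)"
    using f by (intro nn_integral_eq_integral) (auto simp: L2_def)
  then have le: "(\<integral>\<^sup>+z. ennreal ((P f z)\<^sup>2) \<partial>M) \<le> ennreal (\<integral>y. (f y)\<^sup>2 \<partial>M)"
    using P_nn_contr[OF f] by simp
  have "ennreal (\<integral>y. (f y)\<^sup>2 \<partial>M) < \<infinity>" by simp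
  with le have "(\<integral>\<^sup>+z. ennreal ((P f z)\<^sup>2) \<partial>M) < \<infinity>" by (rule le_less_trans)
  then have "integrable M (\<lambda>z. (P f z)\<^sup>2)"
    using P_meas[OF fm] by (intro integrableI_bounded) auto
  then show ?thesis using P_meas[OF fm] by (simp add: L2_def)
qed

lemma P_contr: assumes f: "L2 M f" shows "ip M (P f) (P f) \<le> ip M f f"
proof -
  have kf: "L2 M (P f)" using P_L2[OF f] .
  have "ennreal (ip M (P f) (P f)) = ennreal (\<integral>z. (P f z)\<^sup>2 \<partial>M)"
    by (simp add: ip_def power2_eq_square)
  also have "\<dots> = (\<integral>\<^sup>+z. ennreal ((P f z)\<^sup>2) \<partial>M)"
    using kf unfolding L2_def by (intro nn_integral_eq_integral[symmetric]) auto
  also have "\<dots> \<le> (\<integral>\<^sup>+y. ennreal ((f y)\<^sup>2) \<partial>M)" by (rule P_nn_contr[OF f])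
  also have "\<dots> = ennreal (\<integral>z. (f z)\<^sup>2 \<partial>M)"
    using f unfolding L2_def by (intro nn_integral_eq_integral) auto
  also have "\<dots> = ennreal (ip M f f)" by (simp add: ip_def power2_eq_square)
  finally show ?thesis using ip_self_nonneg[of M f] by (simp add: ennreal_le_iff)
qed

lemma P_rev: assumes f: "L2 M f" and g: "L2 M g"
  shows "ip M (P f) g = ip M f (Q (P (Q g)))"
proof -
  have fm[measurable]: "f \<in> borel_measurable M" using f by (simp add: L2_def)
  have gm[measurable]: "g \<in> borel_measurable M" using g by (simp add: L2_def)
  have I1: "integrable M (\<lambda>z. w z * (f (\<psi> z) * g z))" by (rule int_w[OF L2_mw_psi[OF f] L2_mw[OF g]])
  have I2: "integrable M (\<lambda>z. w z * (f (\<xi> z) * g (\<tau> z)))" by (rule int_w[OF L2_mw_xi[OF f] L2_mw_tau[OF L2_mw[OF g]]])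
  have I3: "integrable M (\<lambda>z. f (\<xi> z) * g z)" using L2_mult_integrable[OF L2_Q[OF f] g] by (simp add: Qop_def)
  have I4: "integrable M (\<lambda>z. w z * (f (\<xi> z) * g z))" by (rule int_w[OF L2_mw_xi[OF f] L2_mw[OF g]])
  have "ip M (P f) g = (\<integral>z. w z * (f (\<psi> z) * g z) + f (\<xi> z) * g z - w z * (f (\<xi> z) * g z) \<partial>M)"
    unfolding ip_def by (rule Bochner_Integration.integral_cong) (auto simp: P_eq algebra_simps)
  also have "\<dots> = (\<integral>z. w z * (f (\<psi> z) * g z) \<partial>M) + (\<integral>z. f (\<xi> z) * g z \<partial>M) - (\<integral>z. w z * (f (\<xi> z) * g z) \<partial>M)"
    using I1 I3 I4 by simp
  also have "(\<integral>z. w z * (f (\<psi> z) * g z) \<partial>M) = (\<integral>z. w z * (f (\<xi> z) * g (\<tau> z)) \<partial>M)"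
  proof -
    have Fm: "(\<lambda>z. f (\<psi> z) * g z) \<in> borel_measurable M"
      using measurable_compose[OF psi_meas fm] gm by (simp add: comp_def borel_measurable_times)
    have "(\<integral>z. w z * (f (\<xi> z) * g (\<tau> z)) \<partial>M) = (\<integral>z. w z * (f (\<psi> (\<tau> z)) * g (\<tau> z)) \<partial>M)"
      by (rule Bochner_Integration.integral_cong) (auto simp: psi_xi_psi)
    also have "\<dots> = (\<integral>z. w z * (f (\<psi> z) * g z) \<partial>M)"
      using T_gen[OF Fm] by simp
    finally show ?thesis by simp
  qed
  finally have L: "ip M (P f) g = (\<integral>z. w z * (f (\<xi> z) * g (\<tau> z)) \<partial>M) + (\<integral>z. f (\<xi> z) * g z \<partial>M) - (\<integral>z. w z * (f (\<xi> z) * g z) \<partial>M)" .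
  have LPQ: "L2 M (P (Q g))" using P_L2[OF L2_Q[OF g]] .
  have "ip M f (Q (P (Q g))) = ip M (Q f) (P (Q g))" using ip_Q_swap[OF f LPQ] by simp
  also have "\<dots> = (\<integral>z. w z * (f (\<xi> z) * g (\<tau> z)) + f (\<xi> z) * g z - w z * (f (\<xi> z) * g z) \<partial>M)"
    unfolding ip_def by (rule Bochner_Integration.integral_cong) (auto simp: P_eq Qop_def xi_inv algebra_simps)
  also have "\<dots> = (\<integral>z. w z * (f (\<xi> z) * g (\<tau> z)) \<partial>M) + (\<integral>z. f (\<xi> z) * g z \<partial>M) - (\<integral>z. w z * (f (\<xi> z) * g z) \<partial>M)"
    using I2 I3 I4 by simp
  finally show ?thesis using L by simp
qed

lemma P_dir: assumes x: "L2 M x"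
  shows "ip M (Q x) (P x) = ip M x x - (1/2) * (\<integral>z. w z * ((x (\<psi> z) - x (\<xi> z)) * (x (\<psi> z) - x (\<xi> z))) \<partial>M)"
proof -
  have xm[measurable]: "x \<in> borel_measurable M" using x by (simp add: L2_def)
  have a: "L2 mw (\<lambda>z. x (\<psi> z))" by (rule L2_mw_psi[OF x])
  have b: "L2 mw (\<lambda>z. x (\<xi> z))" by (rule L2_mw_xi[OF x])
  have I1: "integrable M (\<lambda>z. w z * (x (\<psi> z) * x (\<psi> z)))" by (rule int_w[OF a a])
  have I2: "integrable M (\<lambda>z. w z * (x (\<xi> z) * x (\<xi> z)))" by (rule int_w[OF b b])
  have I3: "integrable M (\<lambda>z. w z * (x (\<xi> z) * x (\<psi> z)))" by (rule int_w[OF b a])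
  have I5: "integrable M (\<lambda>z. x (\<xi> z) * x (\<xi> z))" using L2_mult_integrable[OF L2_Q[OF x] L2_Q[OF x]] by (simp add: Qop_def)
  have J: "(\<integral>z. w z * (x (\<psi> z) * x (\<psi> z)) \<partial>M) = (\<integral>z. w z * (x (\<xi> z) * x (\<xi> z)) \<partial>M)"
  proof -
    have Fm: "(\<lambda>z. x (\<psi> z) * x (\<psi> z)) \<in> borel_measurable M"
      using measurable_compose[OF psi_meas xm] by (simp add: comp_def borel_measurable_times)
    have "(\<integral>z. w z * (x (\<xi> z) * x (\<xi> z)) \<partial>M) = (\<integral>z. w z * (x (\<psi> (\<tau> z)) * x (\<psi> (\<tau> z))) \<partial>M)"
      by (rule Bochner_Integration.integral_cong) (auto simp: psi_xi_psi)
    also have "\<dots> = (\<integral>z. w z * (x (\<psi> z) * x (\<psi> z)) \<partial>M)"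
      using T_gen[OF Fm] by simp
    finally show ?thesis by simp
  qed
  have D: "(\<integral>z. w z * ((x (\<psi> z) - x (\<xi> z)) * (x (\<psi> z) - x (\<xi> z))) \<partial>M)
      = (\<integral>z. w z * (x (\<psi> z) * x (\<psi> z)) \<partial>M) - 2 * (\<integral>z. w z * (x (\<xi> z) * x (\<psi> z)) \<partial>M)
        + (\<integral>z. w z * (x (\<xi> z) * x (\<xi> z)) \<partial>M)"
  proof -
    have "(\<integral>z. w z * ((x (\<psi> z) - x (\<xi> z)) * (x (\<psi> z) - x (\<xi> z))) \<partial>M)
       = (\<integral>z. w z * (x (\<psi> z) * x (\<psi> z)) - 2 * (w z * (x (\<xi> z) * x (\<psi> z))) + w z * (x (\<xi> z) * x (\<xi> z)) \<partial>M)"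
      by (rule Bochner_Integration.integral_cong) (auto simp: algebra_simps)
    then show ?thesis using I1 I2 I3 by simp
  qed
  have Q1: "ip M (Q x) (P x) = (\<integral>z. w z * (x (\<xi> z) * x (\<psi> z)) + x (\<xi> z) * x (\<xi> z) - w z * (x (\<xi> z) * x (\<xi> z)) \<partial>M)"
    unfolding ip_def by (rule Bochner_Integration.integral_cong) (auto simp: P_eq Qop_def algebra_simps)
  also have "\<dots> = (\<integral>z. w z * (x (\<xi> z) * x (\<psi> z)) \<partial>M) + (\<integral>z. x (\<xi> z) * x (\<xi> z) \<partial>M) - (\<integral>z. w z * (x (\<xi> z) * x (\<xi> z)) \<partial>M)"
    using I3 I5 I2 by simp
  also have "(\<integral>z. x (\<xi> z) * x (\<xi> z) \<partial>M) = ip M x x"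
    using ip_Q[OF x x] by (simp add: ip_def Qop_def)
  finally show ?thesis using D J by linarith
qed

end

end



context psys begin

lemma P2_good: assumes adm: "admissible \<phi>" shows "good_op M \<xi> (P2op M \<xi> \<psi> \<phi>)"
  unfolding good_op_def using P_L2[OF adm] P_rev[OF adm] P_contr[OF adm] by blast

lemma dir_order:
  assumes adm1: "admissible \<phi>1" and adm2: "admissible \<phi>2" and le: "\<forall>t\<ge>0. \<phi>2 t \<le> \<phi>1 t"
    and x: "L2 M x"
  shows "ip M (Q x) (P2op M \<xi> \<psi> \<phi>1 x) \<le> ip M (Q x) (P2op M \<xi> \<psi> \<phi>2 x)"
proof -
  let ?D = "\<lambda>z. (x (\<psi> z) - x (\<xi> z)) * (x (\<psi> z) - x (\<xi> z))"
  have d1: "L2 (mw \<phi>1) (\<lambda>z. x (\<psi> z) - x (\<xi> z))"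
    by (rule L2_diff[OF L2_mw_psi[OF adm1 x] L2_mw_xi[OF adm1 x]])
  have d2: "L2 (mw \<phi>2) (\<lambda>z. x (\<psi> z) - x (\<xi> z))"
    by (rule L2_diff[OF L2_mw_psi[OF adm2 x] L2_mw_xi[OF adm2 x]])
  have i1: "integrable M (\<lambda>z. w \<phi>1 z * ?D z)" by (rule int_w[OF adm1 d1 d1])
  have i2: "integrable M (\<lambda>z. w \<phi>2 z * ?D z)" by (rule int_w[OF adm2 d2 d2])
  have "(\<integral>z. w \<phi>2 z * ?D z \<partial>M) \<le> (\<integral>z. w \<phi>1 z * ?D z \<partial>M)"
  proof (rule integral_mono[OF i2 i1])
    fix z
    have "w \<phi>2 z \<le> w \<phi>1 z"
      using le ratio_nonneg[of z] w_def[OF adm2, of z] w_def[OF adm1, of z] by auto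
    then show "w \<phi>2 z * ?D z \<le> w \<phi>1 z * ?D z" by (intro mult_right_mono) auto
  qed
  then show ?thesis using P_dir[OF adm1 x] P_dir[OF adm2 x] by simp
qed

end

context qsys begin

lemma iter_adj:
  assumes ga: "good_op M \<xi> Pa" and gb: "good_op M \<xi> Pb"
  shows "L2 M g \<Longrightarrow> L2 M v \<Longrightarrow> L2 M (((Pa \<circ> Pb) ^^ k) g) \<and> L2 M (((\<lambda>v. Q (Pb (Q (Q (Pa (Q v)))))) ^^ k) v)
     \<and> ip M (((Pa \<circ> Pb) ^^ k) g) v = ip M g (((\<lambda>v. Q (Pb (Q (Q (Pa (Q v)))))) ^^ k) v)"
proof (induction k arbitrary: v)
  case 0 then show ?case by simp
next
  case (Suc k)
  let ?T' = "\<lambda>v. Q (Pb (Q (Q (Pa (Q v)))))"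
  have Lv': "L2 M (?T' v)" using Suc.prems by (simp add: L2_Q L2_P[OF ga] L2_P[OF gb])
  have IH: "L2 M (((Pa \<circ> Pb) ^^ k) g) \<and> L2 M ((?T' ^^ k) (?T' v))
     \<and> ip M (((Pa \<circ> Pb) ^^ k) g) (?T' v) = ip M g ((?T' ^^ k) (?T' v))"
    using Suc.IH[OF Suc.prems(1) Lv'] .
  have L1: "L2 M (((Pa \<circ> Pb) ^^ Suc k) g)" using IH by (simp add: L2_P[OF ga] L2_P[OF gb])
  have "ip M (((Pa \<circ> Pb) ^^ Suc k) g) v = ip M (Pa (Pb (((Pa \<circ> Pb) ^^ k) g))) v" by simp
  also have "\<dots> = ip M (Pb (((Pa \<circ> Pb) ^^ k) g)) (Q (Pa (Q v)))"
    using IH Suc.prems by (simp add: rev_P[OF ga] L2_P[OF gb])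
  also have "\<dots> = ip M (((Pa \<circ> Pb) ^^ k) g) (?T' v)"
    using IH Suc.prems by (simp add: rev_P[OF gb] L2_QPQ[OF ga])
  also have sk: "(?T' ^^ Suc k) v = (?T' ^^ k) (?T' v)" by (simp only: funpow_Suc_right comp_apply)
  have "ip M (((Pa \<circ> Pb) ^^ k) g) (?T' v) = ip M g ((?T' ^^ Suc k) v)" using IH sk by simp
  finally have E: "ip M (((Pa \<circ> Pb) ^^ Suc k) g) v = ip M g ((?T' ^^ Suc k) v)" .
  have L2': "L2 M ((?T' ^^ Suc k) v)" using IH sk by simp
  show ?case using L1 L2' E by blast
qed

lemma iter_lin:
  assumes ga: "good_op M \<xi> Pa" and gb: "good_op M \<xi> Pb" and g1: "L2 M g1" and g2: "L2 M g2" and v: "L2 M v"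
  shows "ip M v (((Pa \<circ> Pb) ^^ k) (\<lambda>x. g1 x + c * g2 x)) = ip M v (((Pa \<circ> Pb) ^^ k) g1) + c * ip M v (((Pa \<circ> Pb) ^^ k) g2)"
proof -
  let ?T' = "\<lambda>v. Q (Pb (Q (Q (Pa (Q v)))))"
  have g12: "L2 M (\<lambda>x. g1 x + c * g2 x)" using g1 g2 by (simp add: L2_add L2_scale)
  have Lv: "L2 M ((?T' ^^ k) v)" using iter_adj[OF ga gb g1 v] by simp
  have "ip M v (((Pa \<circ> Pb) ^^ k) (\<lambda>x. g1 x + c * g2 x)) = ip M (\<lambda>x. g1 x + c * g2 x) ((?T' ^^ k) v)"
    using iter_adj[OF ga gb g12 v] by (simp add: ip_sym)
  also have "\<dots> = ip M g1 ((?T' ^^ k) v) + c * ip M g2 ((?T' ^^ k) v)"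
    using g1 g2 Lv by (simp add: ip_add_left L2_scale ip_scale_left)
  also have "\<dots> = ip M v (((Pa \<circ> Pb) ^^ k) g1) + c * ip M v (((Pa \<circ> Pb) ^^ k) g2)"
    using iter_adj[OF ga gb g1 v] iter_adj[OF ga gb g2 v] by (simp add: ip_sym)
  finally show ?thesis .
qed

lemma funpow_comp_shift: "((f \<circ> g) ^^ k) (f x) = f (((g \<circ> f) ^^ k) x)"
  by (induction k) auto

lemma AB_even: "fst (AB P1 P2 u (2 * k)) = ((P1 \<circ> P2) ^^ k) u \<and> snd (AB P1 P2 u (2 * k)) = ((P2 \<circ> P1) ^^ k) u"
proof (induction k)
  case 0 then show ?case by simp
next
  case (Suc k)
  have "2 * Suc k = Suc (Suc (2 * k))" by simp
  then show ?case using Suc by simp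
qed

lemma AB_odd: "fst (AB P1 P2 u (Suc (2 * k))) = ((P1 \<circ> P2) ^^ k) (P1 u) \<and> snd (AB P1 P2 u (Suc (2 * k))) = ((P2 \<circ> P1) ^^ k) (P2 u)"
  using AB_even[of P1 P2 u k] by (simp add: funpow_comp_shift)

lemma var_lam_eq:
  assumes g1: "good_op M \<xi> P1" and g2: "good_op M \<xi> P2" and Lfb: "L2 M (\<lambda>x. f x - (\<integral>y. f y \<partial>M))"
    and lam: "0 \<le> lam" "lam < (1::real)"
  defines "fb \<equiv> (\<lambda>x. f x - (\<integral>y. f y \<partial>M))"
  shows "var_lam M lam f P1 P2 = (\<Sum>n. lam ^ n * (ip M fb (fst (AB P1 P2 fb n)) + ip M fb (snd (AB P1 P2 fb n)))) - ip M fb fb"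
proof -
  have Lu: "L2 M fb" using Lfb by (simp add: fb_def)
  define c where "c n = lam ^ n * (ip M fb (fst (AB P1 P2 fb n)) + ip M fb (snd (AB P1 P2 fb n)))" for n
  have sc: "summable c" unfolding c_def by (rule summable_terms[OF g1 g2 Lu lam])
  have tm: "lam^(2*k) * ip M fb (((P1 \<circ> P2) ^^ k) (\<lambda>x. fb x + lam * P1 fb x))
        + lam^(2*k) * ip M fb (((P2 \<circ> P1) ^^ k) (\<lambda>x. fb x + lam * P2 fb x)) = c (2*k) + c (Suc (2*k))" for k
  proof -
    have a: "ip M fb (((P1 \<circ> P2) ^^ k) (\<lambda>x. fb x + lam * P1 fb x)) = ip M fb (((P1 \<circ> P2) ^^ k) fb) + lam * ip M fb (((P1 \<circ> P2) ^^ k) (P1 fb))"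
      by (rule iter_lin[OF g1 g2 Lu L2_P[OF g1 Lu] Lu])
    have b: "ip M fb (((P2 \<circ> P1) ^^ k) (\<lambda>x. fb x + lam * P2 fb x)) = ip M fb (((P2 \<circ> P1) ^^ k) fb) + lam * ip M fb (((P2 \<circ> P1) ^^ k) (P2 fb))"
      by (rule iter_lin[OF g2 g1 Lu L2_P[OF g2 Lu] Lu])
    show ?thesis unfolding a b c_def using AB_even[of P1 P2 fb k] AB_odd[of P1 P2 fb k]
      by (simp add: algebra_simps power_Suc)
  qed
  have "(\<lambda>n. sum c {n * 2..<n * 2 + 2}) sums (\<Sum>n. c n)" using sums_group[OF summable_sums[OF sc], of 2] by simp
  moreover have "sum c {n * 2..<n * 2 + 2} = c (2*n) + c (Suc (2*n))" for n
    by (simp add: mult.commute numeral_2_eq_2)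
  ultimately have "(\<lambda>k. c (2*k) + c (Suc (2*k))) sums (\<Sum>n. c n)" by simp
  then have "(\<Sum>k. lam^(2*k) * ip M fb (((P1 \<circ> P2) ^^ k) (\<lambda>x. fb x + lam * P1 fb x))
        + lam^(2*k) * ip M fb (((P2 \<circ> P1) ^^ k) (\<lambda>x. fb x + lam * P2 fb x))) = (\<Sum>n. c n)"
    unfolding tm by (rule sums_unique[symmetric])
  then show ?thesis unfolding var_lam_def Let_def fb_def[symmetric] c_def by simp
qed

end



lemma adm_min: "admissible (\<lambda>t::real. min 1 t)"
  unfolding admissible_def
proof (intro conjI allI impI)
  show "(\<lambda>t::real. min 1 t) \<in> borel_measurable borel" by measurable
next
  fix t :: real assume "t > 0"
  then show "t * min 1 (1 / t) = min 1 t"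
    by (cases "t \<le> 1") (auto simp: min_def field_simps)
qed auto

lemma adm_le_min: assumes "admissible \<phi>" shows "\<forall>t\<ge>0. \<phi> t \<le> min 1 t"
proof (intro allI impI)
  fix t :: real assume t: "0 \<le> t"
  have le1: "\<phi> t \<le> 1" using assms t by (simp add: admissible_def)
  have "\<phi> t \<le> t"
  proof (cases "t = 0")
    case True then show ?thesis using assms by (simp add: admissible_def)
  next
    case False
    then have tp: "0 < t" using t by simp
    then have "t * \<phi> (1 / t) = \<phi> t" using assms by (simp add: admissible_def)
    moreover have "\<phi> (1 / t) \<le> 1" using assms tp by (simp add: admissible_def)
    moreover have "t * \<phi> (1 / t) \<le> t * 1" using \<open>\<phi> (1 / t) \<le> 1\<close> tp by (intro mult_left_mono) auto
    ultimately show ?thesis by simp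
  qed
  then show "\<phi> t \<le> min 1 t" using le1 by simp
qed

theorem theorem3p8:
  fixes M :: "'a measure" and \<xi> \<psi> :: "'a \<Rightarrow> 'a" and K :: "'a \<Rightarrow> 'a measure"
    and \<phi>1 \<phi>2 :: "real \<Rightarrow> real"
  assumes prob: "prob_space M"
    and xi_meas: "\<xi> \<in> measurable M M"
    and xi_inv: "\<forall>x\<in>space M. \<xi> (\<xi> x) = x"
    and xi_pres: "distr M M \<xi> = M"
    and psi_meas: "\<psi> \<in> measurable M M"
    and psi_bij: "bij_betw \<psi> (space M) (space M)"
    and psi_inv: "\<forall>x\<in>space M. the_inv_into (space M) \<psi> x = \<xi> (\<psi> (\<xi> x))"
    and adm1: "admissible \<phi>1" and adm2: "admissible \<phi>2"
    and K_markov: "markov_kernel M K"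
    and K_rev: "reversible M \<xi> (kop K)"
    and phi_le: "\<forall>t\<ge>0. \<phi>2 t \<le> \<phi>1 t"
  shows "(\<forall>f lam. L2 M f \<longrightarrow> (AE x in M. f (\<xi> x) = f x) \<longrightarrow> 0 \<le> lam \<longrightarrow> lam < 1 \<longrightarrow>
           var_lam M lam f (kop K) (P2op M \<xi> \<psi> \<phi>1)
             \<le> var_lam M lam f (kop K) (P2op M \<xi> \<psi> \<phi>2))
    \<and> (\<forall>\<phi> f lam. admissible \<phi> \<longrightarrow> L2 M f \<longrightarrow> (AE x in M. f (\<xi> x) = f x)
           \<longrightarrow> 0 \<le> lam \<longrightarrow> lam < 1 \<longrightarrow>
           var_lam M lam f (kop K) (P2op M \<xi> \<psi> (\<lambda>t. min 1 t))
             \<le> var_lam M lam f (kop K) (P2op M \<xi> \<psi> \<phi>))"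
proof -
  interpret psys M \<xi> \<psi>
    by (rule psys.intro[OF qsys.intro[OF prob xi_meas xi_inv xi_pres] psys_axioms.intro[OF psi_meas psi_bij psi_inv]])
  have gK: "good_op M \<xi> (kop K)"
    by (rule kop_good[OF K_markov[unfolded markov_kernel_def] K_rev])
  have main: "var_lam M lam f (kop K) (P2op M \<xi> \<psi> \<phi>a) \<le> var_lam M lam f (kop K) (P2op M \<xi> \<psi> \<phi>b)"
    if aa: "admissible \<phi>a" and ab: "admissible \<phi>b" and le: "\<forall>t\<ge>0. \<phi>b t \<le> \<phi>a t"
      and f: "L2 M f" and fq: "AE x in M. f (\<xi> x) = f x" and lam: "0 \<le> lam" "lam < 1"
    for \<phi>a \<phi>b f lam
  proof -
    define fb where "fb = (\<lambda>x. f x - (\<integral>y. f y \<partial>M))"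
    have Lfb: "L2 M fb" unfolding fb_def
      using f L2_const[OF prob_space.finite_measure[OF prob]] by (rule L2_diff)
    have Qu: "ip M (Q v) fb = ip M v fb" if v: "L2 M v" for v
    proof -
      have "ip M (Q v) fb = ip M v (Q fb)" by (rule ip_Q_swap[OF v Lfb])
      also have "\<dots> = ip M v fb"
        unfolding ip_def
      proof (rule integral_cong_AE)
        show "(\<lambda>x. v x * Q fb x) \<in> borel_measurable M"
          using v L2_Q[OF Lfb] by (simp add: L2_def borel_measurable_times)
        show "(\<lambda>x. v x * fb x) \<in> borel_measurable M"
          using v Lfb by (simp add: L2_def borel_measurable_times)
        show "AE x in M. v x * Q fb x = v x * fb x"
          using fq by eventually_elim (simp add: Qop_def fb_def)
      qed
      finally show ?thesis .
    qed
    have ga: "good_op M \<xi> (P2op M \<xi> \<psi> \<phi>a)" by (rule P2_good[OF aa])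
    have gb: "good_op M \<xi> (P2op M \<xi> \<psi> \<phi>b)" by (rule P2_good[OF ab])
    have dir: "\<And>x. L2 M x \<Longrightarrow> ip M (Q x) (P2op M \<xi> \<psi> \<phi>a x) \<le> ip M (Q x) (P2op M \<xi> \<psi> \<phi>b x)"
      by (rule dir_order[OF aa ab le])
    have cmp: "(\<Sum>n. lam ^ n * (ip M fb (fst (AB (kop K) (P2op M \<xi> \<psi> \<phi>a) fb n)) + ip M fb (snd (AB (kop K) (P2op M \<xi> \<psi> \<phi>a) fb n))))
      \<le> (\<Sum>n. lam ^ n * (ip M fb (fst (AB (kop K) (P2op M \<xi> \<psi> \<phi>b) fb n)) + ip M fb (snd (AB (kop K) (P2op M \<xi> \<psi> \<phi>b) fb n))))"
      by (rule main_compare[OF gK ga gb dir lam Lfb Qu])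
    have va: "var_lam M lam f (kop K) (P2op M \<xi> \<psi> \<phi>a) = (\<Sum>n. lam ^ n * (ip M fb (fst (AB (kop K) (P2op M \<xi> \<psi> \<phi>a) fb n)) + ip M fb (snd (AB (kop K) (P2op M \<xi> \<psi> \<phi>a) fb n)))) - ip M fb fb"
      using var_lam_eq[OF gK ga Lfb[unfolded fb_def] lam] by (simp add: fb_def)
    have vb: "var_lam M lam f (kop K) (P2op M \<xi> \<psi> \<phi>b) = (\<Sum>n. lam ^ n * (ip M fb (fst (AB (kop K) (P2op M \<xi> \<psi> \<phi>b) fb n)) + ip M fb (snd (AB (kop K) (P2op M \<xi> \<psi> \<phi>b) fb n)))) - ip M fb fb"
      using var_lam_eq[OF gK gb Lfb[unfolded fb_def] lam] by (simp add: fb_def)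
    show ?thesis using cmp va vb by simp
  qed
  show ?thesis
  proof (intro conjI allI impI)
    fix f lam assume "L2 M f" "AE x in M. f (\<xi> x) = f x" "0 \<le> lam" "lam < (1::real)"
    then show "var_lam M lam f (kop K) (P2op M \<xi> \<psi> \<phi>1) \<le> var_lam M lam f (kop K) (P2op M \<xi> \<psi> \<phi>2)"
      using main[OF adm1 adm2 phi_le] by blast
  next
    fix \<phi> f lam assume "admissible \<phi>" "L2 M f" "AE x in M. f (\<xi> x) = f x" "0 \<le> lam" "lam < (1::real)"
    then show "var_lam M lam f (kop K) (P2op M \<xi> \<psi> (\<lambda>t. min 1 t)) \<le> var_lam M lam f (kop K) (P2op M \<xi> \<psi> \<phi>)"
      using main[OF adm_min _ adm_le_min] by blast
  qed
qed


end
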